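(* Let $\Delta^\tau<\Delta$, let $\pi$ be a policy for the $\Delta$-delayed task with Q-function $Q$, and $\pi^\tau$ a policy for the $\Delta^\tau$-delayed task with Q-function $Q^\tau$, and suppose $Q^\tau$ is $L_Q$-Lipschitz continuous. Then for every $x_t\in\mathcal X$, $$\mathbb E_{a_t\sim\pi(\cdot|x_t),\;x^\tau_t\sim b_\Delta(\cdot|x_t)}\big[Q^\tau(x^\tau_t,a_t)-Q(x_t,a_t)\big]\le\frac{\gamma L_Q}{1-\gamma}\,\mathbb E_{a_t\sim\pi(\cdot|x_t),\;x_{t+1}\sim\mathcal P_\Delta(\cdot|x_t,a_t),\;\hat x\sim d^\pi_{x_{t+1}},\;\hat x^\tau\sim b_\Delta(\cdot|\hat x)}\big[\mathcal W_1\big(\pi^\tau(\cdot|\hat x^\tau)\,\|\,\pi(\cdot|\hat x)\big)\big].$$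
   Context: Let $(\mathcal S,\mathcal A,\mathcal P,\mathcal R,\gamma)$ be an MDP with state space $\mathcal S$, action space $\mathcal A$ equipped with a metric $d_{\mathcal A}$, transition kernel $\mathcal P(\cdot|s,a)$, bounded reward $\mathcal R:\mathcal S\times\mathcal A\to\mathbb R$ and discount factor $\gamma\in(0,1)$. For a delay $\Delta\in\mathbb N$, the augmented state space is $\mathcal X=\mathcal S\times\mathcal A^\Delta$, with elements $x_t=(s_{t-\Delta},a_{t-\Delta},\dots,a_{t-1})$. The constant delayed MDP (CDMDP) with delay $\Delta$ has transition kernel $\mathcal P_\Delta(\cdot|x_t,a_t)$: the next augmented state is $x_{t+1}=(s_{t-\Delta+1},a_{t-\Delta+1},\dots,a_{t-1},a_t)$ with $s_{t-\Delta+1}\sim\mathcal P(\cdot|s_{t-\Delta},a_{t-\Delta})$; its reward is $\mathcal R_\Delta(x_t,a_t)=\mathbb E_{s_t\sim b(\cdot|x_t)}[\mathcal R(s_t,a_t)]$, where $b(\cdot|x_t)$ is the law of $s_t$ obtained from $s_{t-\Delta}$ by successively sampling $s_{t-\Delta+i+1}\sim\mathcal P(\cdot|s_{t-\Delta+i},a_{t-\Delta+i})$ for $i=0,\dots,\Delta-1$. For an auxiliary delay $\Delta^\tau\in\mathbb N$ with $\Delta^\tau<\Delta$, define analogously $\mathcal X^\tau=\mathcal S\times\mathcal A^{\Delta^\tau}$, the kernel $\mathcal P_{\Delta^\tau}$ and the reward $\mathcal R_\tau:=\mathcal R_{\Delta^\tau}$. The delayed belief $b_\Delta(\cdot|x_t)$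 is the distribution on $\mathcal X^\tau$ of $x^\tau_t=(s_{t-\Delta^\tau},a_{t-\Delta^\tau},\dots,a_{t-1})$, where the actions are copied from $x_t$ and $s_{t-\Delta^\tau}$ is obtained from $s_{t-\Delta}$ by successively sampling $s_{t-\Delta+i+1}\sim\mathcal P(\cdot|s_{t-\Delta+i},a_{t-\Delta+i})$ for $i=0,\dots,\Delta-\Delta^\tau-1$. A policy for the $\Delta$-delayed task is a Markov kernel $\pi(\cdot|x)$ on $\mathcal A$, $x\in\mathcal X$; its value functions $V(x)$, $Q(x,a)$ are the expected infinite-horizon discounted sums $\sum_{t\ge0}\gamma^t\mathcal R_\Delta(x_t,a_t)$ in the $\Delta$-CDMDP following $\pi$. A policy $\pi^\tau$ for the $\Delta^\tau$-delayed task is a kernel on $\mathcal A$ indexed by $\mathcal X^\tau$, with value functions $V^\tau,Q^\tau$ defined analogously in the $\Delta^\tau$-CDMDP with reward $\mathcal R_\tau$. $d^\pi_x(\cdot)=(1-\gamma)\sum_{i\ge0}\gamma^i\Pr(x_i\in\cdot\mid x_0=x)$ is the normalized discounted augmented-state visitation distribution under $\pi$ in the $\Delta$-CDMDP. "$Q^\tau$ is $L_Q$-Lipschitz continuous" means in particular $|Q^\tau(x^\tau,a_1)-Q^\tau(x^\tau,a_2)|\le L_Q\,d_{\mathcal A}(a_1,a_2)$ for all $x^\tau,a_1,a_2$. $\mathcal W_1$ is the $L^1$-Wasserstein distance on probability distributions on $\mathcal A$ with respect to $d_{\mathcal A}$. *)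

theory Defs
  imports "HOL-Probability.Probability"
begin

text \<open>Augmented state space S x A^n. Action tuples (a_{t-n},...,a_{t-1}) are encoded
  as extensional functions on {..<n} (index i holds a_{t-n+i}).\<close>

definition act_space :: "nat \<Rightarrow> (nat \<Rightarrow> 'a::metric_space) measure" where
  "act_space n = PiM {..<n} (\<lambda>_. borel)"

definition aug_space :: "'s measure \<Rightarrow> nat \<Rightarrow> ('s \<times> (nat \<Rightarrow> 'a::metric_space)) measure" where
  "aug_space S n = S \<Otimes>\<^sub>M act_space n"

primrec roll :: "'s measure \<Rightarrow> ('s \<Rightarrow> 'a \<Rightarrow> 's measure) \<Rightarrow> 's \<Rightarrow> (nat \<Rightarrow> 'a) \<Rightarrow> nat \<Rightarrow> 's measure" where
  "roll S P s as 0 = return S s"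
| "roll S P s as (Suc k) = bind (roll S P s as k) (\<lambda>s'. P s' (as k))"

text \<open>Belief b(.|x) for delay n: law of s_t given x_t = (s_{t-n}, a_{t-n},...,a_{t-1}).\<close>
definition belief :: "'s measure \<Rightarrow> ('s \<Rightarrow> 'a \<Rightarrow> 's measure) \<Rightarrow> nat
    \<Rightarrow> ('s \<times> (nat \<Rightarrow> 'a)) \<Rightarrow> 's measure" where
  "belief S P n x = roll S P (fst x) (snd x) n"

definition delayed_belief :: "'s measure \<Rightarrow> ('s \<Rightarrow> 'a::metric_space \<Rightarrow> 's measure) \<Rightarrow> nat \<Rightarrow> nat
    \<Rightarrow> ('s \<times> (nat \<Rightarrow> 'a)) \<Rightarrow> ('s \<times> (nat \<Rightarrow> 'a)) measure" where
  "delayed_belief S P n m x =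
     distr (roll S P (fst x) (snd x) (n - m)) (aug_space S m)
       (\<lambda>s'. (s', restrict (\<lambda>i. snd x (i + (n - m))) {..<m}))"

definition cd_reward :: "'s measure \<Rightarrow> ('s \<Rightarrow> 'a \<Rightarrow> 's measure) \<Rightarrow> ('s \<Rightarrow> 'a \<Rightarrow> real) \<Rightarrow> nat
    \<Rightarrow> ('s \<times> (nat \<Rightarrow> 'a)) \<Rightarrow> 'a \<Rightarrow> real" where
  "cd_reward S P R n x a = (\<integral>s. R s a \<partial>belief S P n x)"

text \<open>Transition kernel P_n of the n-CDMDP: with the extended action sequence
  (a_{t-n},...,a_{t-1},a_t), the oldest state is advanced by the oldest action and
  the new action is appended.\<close>
definition ext_act :: "nat \<Rightarrow> (nat \<Rightarrow> 'a) \<Rightarrow> 'a \<Rightarrow> nat \<Rightarrow> 'a" where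
  "ext_act n as a i = (if i < n then as i else a)"

definition cd_kernel :: "'s measure \<Rightarrow> ('s \<Rightarrow> 'a::metric_space \<Rightarrow> 's measure) \<Rightarrow> nat
    \<Rightarrow> ('s \<times> (nat \<Rightarrow> 'a)) \<Rightarrow> 'a \<Rightarrow> ('s \<times> (nat \<Rightarrow> 'a)) measure" where
  "cd_kernel S P n x a =
     distr (P (fst x) (ext_act n (snd x) a 0)) (aug_space S n)
       (\<lambda>s'. (s', restrict (\<lambda>i. ext_act n (snd x) a (i + 1)) {..<n}))"

definition sa_step :: "'s measure \<Rightarrow> ('s \<Rightarrow> 'a::metric_space \<Rightarrow> 's measure) \<Rightarrow> nat
    \<Rightarrow> (('s \<times> (nat \<Rightarrow> 'a)) \<Rightarrow> 'a measure)
    \<Rightarrow> ('s \<times> (nat \<Rightarrow> 'a)) \<times> 'a \<Rightarrow> (('s \<times> (nat \<Rightarrow> 'a)) \<times> 'a) measure" where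
  "sa_step S P n pol xa =
     bind (cd_kernel S P n (fst xa) (snd xa))
       (\<lambda>x'. distr (pol x') (aug_space S n \<Otimes>\<^sub>M borel) (\<lambda>a'. (x', a')))"

primrec traj :: "'s measure \<Rightarrow> ('s \<Rightarrow> 'a::metric_space \<Rightarrow> 's measure) \<Rightarrow> nat
    \<Rightarrow> (('s \<times> (nat \<Rightarrow> 'a)) \<Rightarrow> 'a measure) \<Rightarrow> (('s \<times> (nat \<Rightarrow> 'a)) \<times> 'a) measure
    \<Rightarrow> nat \<Rightarrow> (('s \<times> (nat \<Rightarrow> 'a)) \<times> 'a) measure" where
  "traj S P n pol mu0 0 = mu0"
| "traj S P n pol mu0 (Suc i) = bind (traj S P n pol mu0 i) (sa_step S P n pol)"

definition Q_fun :: "'s measure \<Rightarrow> ('s \<Rightarrow> 'a::metric_space \<Rightarrow> 's measure) \<Rightarrow> ('s \<Rightarrow> 'a \<Rightarrow> real)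
    \<Rightarrow> real \<Rightarrow> nat \<Rightarrow> (('s \<times> (nat \<Rightarrow> 'a)) \<Rightarrow> 'a measure)
    \<Rightarrow> ('s \<times> (nat \<Rightarrow> 'a)) \<Rightarrow> 'a \<Rightarrow> real" where
  "Q_fun S P R \<gamma> n pol x a =
     (\<Sum>i. \<gamma> ^ i * (\<integral>xa. cd_reward S P R n (fst xa) (snd xa)
         \<partial>traj S P n pol (return (aug_space S n \<Otimes>\<^sub>M borel) (x, a)) i))"

definition state_law :: "'s measure \<Rightarrow> ('s \<Rightarrow> 'a::metric_space \<Rightarrow> 's measure) \<Rightarrow> nat
    \<Rightarrow> (('s \<times> (nat \<Rightarrow> 'a)) \<Rightarrow> 'a measure) \<Rightarrow> ('s \<times> (nat \<Rightarrow> 'a)) \<Rightarrow> nat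
    \<Rightarrow> ('s \<times> (nat \<Rightarrow> 'a)) measure" where
  "state_law S P n pol x i =
     distr (traj S P n pol (distr (pol x) (aug_space S n \<Otimes>\<^sub>M borel) (\<lambda>a. (x, a))) i)
       (aug_space S n) fst"

text \<open>Normalized discounted visitation d^pi_x = (1-gamma) sum_i gamma^i Pr(x_i \<in> . | x_0 = x),
  written as the mixture of the laws of x_i with geometric weights (1-gamma) gamma^i.\<close>
definition visitation :: "'s measure \<Rightarrow> ('s \<Rightarrow> 'a::metric_space \<Rightarrow> 's measure) \<Rightarrow> real \<Rightarrow> nat
    \<Rightarrow> (('s \<times> (nat \<Rightarrow> 'a)) \<Rightarrow> 'a measure) \<Rightarrow> ('s \<times> (nat \<Rightarrow> 'a))
    \<Rightarrow> ('s \<times> (nat \<Rightarrow> 'a)) measure" where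
  "visitation S P \<gamma> n pol x =
     bind (measure_pmf (geometric_pmf (1 - \<gamma>))) (\<lambda>i. state_law S P n pol x i)"

definition couplings :: "'a::metric_space measure \<Rightarrow> 'a measure \<Rightarrow> ('a \<times> 'a) measure set" where
  "couplings \<mu> \<nu> = {c. prob_space c \<and> sets c = sets (borel \<Otimes>\<^sub>M borel)
                       \<and> distr c borel fst = \<mu> \<and> distr c borel snd = \<nu>}"

definition wasserstein1 :: "'a::metric_space measure \<Rightarrow> 'a measure \<Rightarrow> ennreal" where
  "wasserstein1 \<mu> \<nu> = (INF c \<in> couplings \<mu> \<nu>. \<integral>\<^sup>+ p. ennreal (dist (fst p) (snd p)) \<partial>c)"

end

theory Submission
  imports Defs
begin

lemma int_bnd:
  fixes f :: "'x \<Rightarrow> real"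
  assumes "prob_space M" "f \<in> borel_measurable M" "\<And>x. x \<in> space M \<Longrightarrow> \<bar>f x\<bar> \<le> C"
  shows "abs (\<integral>x. f x \<partial>M) \<le> C"
proof -
  interpret prob_space M by fact
  have "integrable M f" using assms by (intro integrable_const_bound[where B=C]) auto
  then have "(\<integral>x. \<bar>f x\<bar> \<partial>M) \<le> C" using assms by (intro integral_le_const) auto
  then show ?thesis using integral_abs_bound[of M f] by linarith
qed

lemma intgr:
  fixes f :: "'x \<Rightarrow> real"
  assumes "prob_space M" "f \<in> borel_measurable M" "\<And>x. x \<in> space M \<Longrightarrow> \<bar>f x\<bar> \<le> C"
  shows "integrable M f"
proof -
  interpret prob_space M by fact
  show ?thesis using assms by (intro integrable_const_bound[where B=C]) auto
qed

lemma integral_kernel_meas: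
  fixes f :: "'x \<times> 'y \<Rightarrow> real"
  assumes f: "f \<in> borel_measurable (M \<Otimes>\<^sub>M N)" and K: "K \<in> M \<rightarrow>\<^sub>M prob_algebra N"
  shows "(\<lambda>x. \<integral>y. f (x, y) \<partial>K x) \<in> borel_measurable M"
proof -
  have D: "(\<lambda>x. distr (K x) (M \<Otimes>\<^sub>M N) (\<lambda>y. (x, y))) \<in> M \<rightarrow>\<^sub>M prob_algebra (M \<Otimes>\<^sub>M N)"
    by (rule measurable_distr_prob_space2[OF K]) simp
  have m: "(\<lambda>x. \<integral>z. f z \<partial>distr (K x) (M \<Otimes>\<^sub>M N) (\<lambda>y. (x, y))) \<in> borel_measurable M"
    by (rule measurable_compose[OF measurable_prob_algebraD[OF D] integral_measurable_subprob_algebra[OF f]])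
  show ?thesis
  proof (rule measurable_cong[THEN iffD1, OF _ m])
    fix x assume x: "x \<in> space M"
    have sK: "sets (K x) = sets N" using measurable_space[OF K x] by (simp add: space_prob_algebra)
    have "(\<lambda>y. (x, y)) \<in> K x \<rightarrow>\<^sub>M M \<Otimes>\<^sub>M N"
      using x by (simp add: measurable_cong_sets[OF sK refl])
    then show "(\<integral>z. f z \<partial>distr (K x) (M \<Otimes>\<^sub>M N) (\<lambda>y. (x, y))) = (\<integral>y. f (x, y) \<partial>K x)"
      by (rule integral_distr) (rule f)
  qed
qed

lemma ennreal_int_le:
  fixes k :: "'x \<Rightarrow> real"
  assumes "integrable M k"
  shows "ennreal (\<integral>x. k x \<partial>M) \<le> (\<integral>\<^sup>+x. ennreal (k x) \<partial>M)"
proof -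
  have im: "integrable M (\<lambda>x. max 0 (k x))" using assms by auto
  have "(\<integral>x. k x \<partial>M) \<le> (\<integral>x. max 0 (k x) \<partial>M)"
    by (rule integral_mono[OF assms im]) auto
  then have "ennreal (\<integral>x. k x \<partial>M) \<le> ennreal (\<integral>x. max 0 (k x) \<partial>M)" by (rule ennreal_leI)
  also have "\<dots> = (\<integral>\<^sup>+x. ennreal (max 0 (k x)) \<partial>M)"
    by (rule nn_integral_eq_integral[symmetric, OF im]) auto
  also have "\<dots> = (\<integral>\<^sup>+x. ennreal (k x) \<partial>M)"
    by (simp add: ennreal_max_0)
  finally show ?thesis .
qed

lemma kantorovich:
  fixes f :: "'a::metric_space \<Rightarrow> real"
  assumes L: "0 < L" and lip: "L-lipschitz_on UNIV f" and fb: "\<And>a. \<bar>f a\<bar> \<le> C"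
    and mu: "\<mu> \<in> space (prob_algebra borel)" and nu: "\<nu> \<in> space (prob_algebra borel)"
  shows "ennreal (((\<integral>a. f a \<partial>\<mu>) - (\<integral>a. f a \<partial>\<nu>)) / L) \<le> wasserstein1 \<mu> \<nu>"
  unfolding wasserstein1_def
proof (rule INF_greatest)
  fix c assume "c \<in> couplings \<mu> \<nu>"
  then have c: "prob_space c" "sets c = sets (borel \<Otimes>\<^sub>M borel)" "distr c borel fst = \<mu>" "distr c borel snd = \<nu>"
    by (auto simp: couplings_def)
  have fm: "f \<in> borel_measurable borel"
    by (rule borel_measurable_continuous_onI) (rule lipschitz_on_continuous_on[OF lip])
  have fstm: "fst \<in> c \<rightarrow>\<^sub>M borel" and sndm: "snd \<in> c \<rightarrow>\<^sub>M borel"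
    by (simp_all add: measurable_cong_sets[OF c(2) refl])
  have i1: "(\<integral>a. f a \<partial>\<mu>) = (\<integral>p. f (fst p) \<partial>c)"
    unfolding c(3)[symmetric] by (rule integral_distr[OF fstm fm])
  have i2: "(\<integral>a. f a \<partial>\<nu>) = (\<integral>p. f (snd p) \<partial>c)"
    unfolding c(4)[symmetric] by (rule integral_distr[OF sndm fm])
  have int1: "integrable c (\<lambda>p. f (fst p))"
    by (rule intgr[OF c(1), where C=C]) (auto intro: measurable_compose[OF fstm fm] fb)
  have int2: "integrable c (\<lambda>p. f (snd p))"
    by (rule intgr[OF c(1), where C=C]) (auto intro: measurable_compose[OF sndm fm] fb)
  have eqr: "((\<integral>a. f a \<partial>\<mu>) - (\<integral>a. f a \<partial>\<nu>)) / L = (\<integral>p. (f (fst p) - f (snd p)) / L \<partial>c)"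
    unfolding i1 i2 by (simp add: Bochner_Integration.integral_diff[OF int1 int2])
  have "ennreal (((\<integral>a. f a \<partial>\<mu>) - (\<integral>a. f a \<partial>\<nu>)) / L) = ennreal (\<integral>p. (f (fst p) - f (snd p)) / L \<partial>c)"
    using eqr by (rule arg_cong)
  also have "\<dots> \<le> (\<integral>\<^sup>+p. ennreal ((f (fst p) - f (snd p)) / L) \<partial>c)"
    by (rule ennreal_int_le) (intro integrable_divide Bochner_Integration.integrable_diff int1 int2)
  also have "\<dots> \<le> (\<integral>\<^sup>+p. ennreal (dist (fst p) (snd p)) \<partial>c)"
  proof (rule nn_integral_mono)
    fix p :: "'a \<times> 'a"
    have "dist (f (fst p)) (f (snd p)) \<le> L * dist (fst p) (snd p)"
      using lip by (auto simp: lipschitz_on_def)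
    then have "(f (fst p) - f (snd p)) / L \<le> dist (fst p) (snd p)"
      using L by (simp add: dist_real_def divide_simps abs_le_iff mult.commute)
    then show "ennreal ((f (fst p) - f (snd p)) / L) \<le> ennreal (dist (fst p) (snd p))"
      by (rule ennreal_leI)
  qed
  finally show "ennreal (((\<integral>a. f a \<partial>\<mu>) - (\<integral>a. f a \<partial>\<nu>)) / L) \<le> (\<integral>\<^sup>+p. ennreal (dist (fst p) (snd p)) \<partial>c)" .
qed

lemma prob_meas_facts:
  assumes "M \<in> space (prob_algebra N)"
  shows "prob_space M" "sets M = sets N" "space M = space N"
proof -
  have h: "prob_space M \<and> sets M = sets N" using assms by (simp add: space_prob_algebra)
  then show "prob_space M" "sets M = sets N" by auto
  show "space M = space N" using h sets_eq_imp_space_eq by blast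
qed

locale dm =
  fixes S :: "'s measure" and P :: "'s \<Rightarrow> 'a::metric_space \<Rightarrow> 's measure"
    and R :: "'s \<Rightarrow> 'a \<Rightarrow> real" and \<gamma> B :: real
  assumes P_kernel: "(\<lambda>(s, a). P s a) \<in> S \<Otimes>\<^sub>M borel \<rightarrow>\<^sub>M prob_algebra S"
    and R_meas: "(\<lambda>(s, a). R s a) \<in> borel_measurable (S \<Otimes>\<^sub>M borel)"
    and R_bnd: "\<And>s a. \<bar>R s a\<bar> \<le> B"
    and gam: "0 < \<gamma>" "\<gamma> < 1"
begin

lemma P_meas:
  assumes f: "f \<in> M \<rightarrow>\<^sub>M S" and g: "g \<in> M \<rightarrow>\<^sub>M borel"
  shows "(\<lambda>z. P (f z) (g z)) \<in> M \<rightarrow>\<^sub>M prob_algebra S"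
proof -
  have "(\<lambda>z. (f z, g z)) \<in> M \<rightarrow>\<^sub>M S \<Otimes>\<^sub>M borel" using f g by measurable
  from measurable_compose[OF this P_kernel] show ?thesis by simp
qed

lemma roll_meas:
  assumes f: "f \<in> M \<rightarrow>\<^sub>M S" and g: "\<And>i. i < k \<Longrightarrow> (\<lambda>z. g z i) \<in> M \<rightarrow>\<^sub>M borel"
  shows "(\<lambda>z. roll S P (f z) (g z) k) \<in> M \<rightarrow>\<^sub>M prob_algebra S"
  using g
proof (induction k)
  case 0
  then show ?case using measurable_compose[OF f measurable_return_prob_space] by simp
next
  case (Suc k)
  have IH: "(\<lambda>z. roll S P (f z) (g z) k) \<in> M \<rightarrow>\<^sub>M prob_algebra S" using Suc by auto
  have gk: "(\<lambda>z. g z k) \<in> M \<rightarrow>\<^sub>M borel" using Suc by auto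
  have "(\<lambda>(z, s'). P s' (g z k)) \<in> M \<Otimes>\<^sub>M S \<rightarrow>\<^sub>M prob_algebra S"
    using P_meas[of snd "M \<Otimes>\<^sub>M S" "\<lambda>p. g (fst p) k"] gk
    by (simp add: case_prod_beta' measurable_compose[OF measurable_fst gk])
  then show ?case
    by (simp add: measurable_bind_prob_space2[OF IH])
qed

lemma act_meas: "i < n \<Longrightarrow> (\<lambda>x. snd x i) \<in> aug_space S n \<rightarrow>\<^sub>M (borel :: 'a measure)"
  unfolding aug_space_def act_space_def
  by (rule measurable_compose[OF measurable_snd measurable_component_singleton]) auto

lemma belief_meas: "(\<lambda>x. belief S P n x) \<in> aug_space S n \<rightarrow>\<^sub>M prob_algebra S"
  unfolding belief_def
  by (rule roll_meas) (auto simp: aug_space_def intro: act_meas[unfolded aug_space_def])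

lemma ext_act_meas:
  assumes "\<And>i. i < n \<Longrightarrow> (\<lambda>z. h z i) \<in> M \<rightarrow>\<^sub>M borel" "g \<in> M \<rightarrow>\<^sub>M borel"
  shows "(\<lambda>z. ext_act n (h z) (g z) j) \<in> M \<rightarrow>\<^sub>M borel"
  by (cases "j < n") (simp_all add: ext_act_def assms)

lemma fst_meas: "fst \<in> aug_space S n \<rightarrow>\<^sub>M S"
  unfolding aug_space_def by simp

lemma cd_reward_meas: "(\<lambda>z. cd_reward S P R n (fst z) (snd z)) \<in> borel_measurable (aug_space S n \<Otimes>\<^sub>M borel)"
proof -
  have K: "(\<lambda>z. belief S P n (fst z)) \<in> aug_space S n \<Otimes>\<^sub>M borel \<rightarrow>\<^sub>M prob_algebra S"
    by (rule measurable_compose[OF measurable_fst belief_meas])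
  have "(\<lambda>p. (snd p, snd (fst p))) \<in> (aug_space S n \<Otimes>\<^sub>M borel) \<Otimes>\<^sub>M S \<rightarrow>\<^sub>M S \<Otimes>\<^sub>M borel"
    by simp
  from measurable_compose[OF this R_meas]
  have f: "(\<lambda>p. R (snd p) (snd (fst p))) \<in> borel_measurable ((aug_space S n \<Otimes>\<^sub>M borel) \<Otimes>\<^sub>M S)"
    by simp
  show ?thesis
    using integral_kernel_meas[OF f K] by (simp add: cd_reward_def)
qed

lemma cd_reward_bnd: "x \<in> space (aug_space S n) \<Longrightarrow> \<bar>cd_reward S P R n x a\<bar> \<le> B"
  unfolding cd_reward_def
proof (rule int_bnd)
  assume x: "x \<in> space (aug_space S n)"
  have "belief S P n x \<in> space (prob_algebra S)" using measurable_space[OF belief_meas x] .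
  have "(\<lambda>s. (s, a)) \<in> S \<rightarrow>\<^sub>M S \<Otimes>\<^sub>M borel" by simp
  from measurable_compose[OF this R_meas] have "(\<lambda>s. R s a) \<in> borel_measurable S" by simp
  moreover note bf = prob_meas_facts[OF \<open>belief S P n x \<in> space (prob_algebra S)\<close>]
  ultimately show "prob_space (belief S P n x)" and "(\<lambda>s. R s a) \<in> borel_measurable (belief S P n x)"
    by (simp_all add: measurable_cong_sets[OF bf(2) refl])
qed (rule R_bnd)

lemma cd_kernel_meas:
  "(\<lambda>z. cd_kernel S P n (fst z) (snd z)) \<in> aug_space S n \<Otimes>\<^sub>M borel \<rightarrow>\<^sub>M prob_algebra (aug_space S n)"
  unfolding cd_kernel_def
proof (rule measurable_distr_prob_space2)
  show "(\<lambda>z. P (fst (fst z)) (ext_act n (snd (fst z)) (snd z) 0)) \<in> aug_space S n \<Otimes>\<^sub>M borel \<rightarrow>\<^sub>M prob_algebra S"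
    by (rule P_meas) (auto intro!: ext_act_meas measurable_compose[OF measurable_fst act_meas] 
         measurable_compose[OF measurable_fst fst_meas])
  show "(\<lambda>(z, s'). (s', restrict (\<lambda>i. ext_act n (snd (fst z)) (snd z) (i + 1)) {..<n}))
      \<in> (aug_space S n \<Otimes>\<^sub>M borel) \<Otimes>\<^sub>M S \<rightarrow>\<^sub>M aug_space S n"
    unfolding aug_space_def act_space_def
    apply (simp add: case_prod_beta')
    apply (intro measurable_Pair measurable_restrict ext_act_meas)
      apply (auto intro: measurable_compose[OF measurable_fst measurable_compose[OF measurable_fst act_meas[unfolded aug_space_def act_space_def]]])
    done
qed

lemma sa_step_meas:
  assumes pol: "pol \<in> aug_space S n \<rightarrow>\<^sub>M prob_algebra borel"
  shows "sa_step S P n pol \<in> aug_space S n \<Otimes>\<^sub>M borel \<rightarrow>\<^sub>M prob_algebra (aug_space S n \<Otimes>\<^sub>M borel)"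
proof -
  have g: "(\<lambda>x'. distr (pol x') (aug_space S n \<Otimes>\<^sub>M borel) (\<lambda>a'. (x', a'))) \<in> aug_space S n \<rightarrow>\<^sub>M prob_algebra (aug_space S n \<Otimes>\<^sub>M borel)"
    by (rule measurable_distr_prob_space2[OF pol]) simp
  show ?thesis
    unfolding sa_step_def[abs_def]
    by (rule measurable_bind_prob_space[OF cd_kernel_meas g])
qed

lemma db_meas:
  assumes "m \<le> n"
  shows "(\<lambda>x. delayed_belief S P n m x) \<in> aug_space S n \<rightarrow>\<^sub>M prob_algebra (aug_space S m)"
  unfolding delayed_belief_def
proof (rule measurable_distr_prob_space2)
  show "(\<lambda>x. roll S P (fst x) (snd x) (n - m)) \<in> aug_space S n \<rightarrow>\<^sub>M prob_algebra S"
    by (rule roll_meas) (auto intro: fst_meas act_meas)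
  show "(\<lambda>(x :: 's \<times> (nat \<Rightarrow> 'a), s'). (s', restrict (\<lambda>i. snd x (i + (n - m))) {..<m})) \<in> aug_space S n \<Otimes>\<^sub>M S \<rightarrow>\<^sub>M aug_space S m"
    unfolding aug_space_def[of S m] act_space_def[of m]
    apply (simp add: case_prod_beta')
    apply (intro measurable_Pair measurable_restrict)
     apply simp
    subgoal for i
    proof -
      assume "i \<in> {..<m}"
      then have i: "i + (n - m) < n" using assms by auto
      show ?thesis using measurable_compose[OF measurable_fst[of "aug_space S n" S] act_meas[OF i]] by simp
    qed
    done
qed

lemma geo_term_bnd:
  assumes "\<bar>c\<bar> \<le> C"
  shows "\<bar>\<gamma> ^ i * c\<bar> \<le> C * \<gamma> ^ i"
proof -
  have "\<bar>\<gamma> ^ i * c\<bar> = \<gamma> ^ i * \<bar>c\<bar>" using gam by (simp add: abs_mult)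
  also have "\<dots> \<le> \<gamma> ^ i * C" using gam assms by (intro mult_left_mono) auto
  finally show ?thesis by (simp add: mult.commute)
qed

lemma geo_summable:
  assumes "\<And>i. \<bar>f i\<bar> \<le> C"
  shows "summable (\<lambda>i. \<gamma> ^ i * f i)"
proof (rule summable_comparison_test[where g="\<lambda>i. C * \<gamma> ^ i"])
  show "\<exists>N. \<forall>n\<ge>N. norm (\<gamma> ^ n * f n) \<le> C * \<gamma> ^ n"
    using geo_term_bnd[OF assms] by auto
  show "summable (\<lambda>i. C * \<gamma> ^ i)" using gam by (intro summable_mult summable_geometric) auto
qed

lemma geo_bnd:
  assumes "\<And>i. \<bar>f i\<bar> \<le> C"
  shows "\<bar>\<Sum>i. \<gamma> ^ i * f i\<bar> \<le> C / (1 - \<gamma>)"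
proof -
  have s1: "summable (\<lambda>i. C * \<gamma> ^ i)" using gam by (intro summable_mult summable_geometric) auto
  have s2: "summable (\<lambda>i. norm (\<gamma> ^ i * f i))"
  proof (rule summable_comparison_test[OF _ s1])
    show "\<exists>N. \<forall>n\<ge>N. norm (norm (\<gamma> ^ n * f n)) \<le> C * \<gamma> ^ n"
      using geo_term_bnd[OF assms] by auto
  qed
  have "\<bar>\<Sum>i. \<gamma> ^ i * f i\<bar> \<le> (\<Sum>i. norm (\<gamma> ^ i * f i))"
    using summable_norm[OF s2] by simp
  also have "\<dots> \<le> (\<Sum>i. C * \<gamma> ^ i)"
    by (intro suminf_le s2 s1) (use geo_term_bnd[OF assms] in auto)
  also have "\<dots> = C / (1 - \<gamma>)"
    using gam by (simp add: suminf_mult suminf_geometric summable_geometric divide_simps)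
  finally show ?thesis .
qed

lemma int_suminf:
  fixes f :: "nat \<Rightarrow> 'x \<Rightarrow> real"
  assumes M: "prob_space M" and fm: "\<And>i. f i \<in> borel_measurable M"
    and fb: "\<And>i x. x \<in> space M \<Longrightarrow> \<bar>f i x\<bar> \<le> C"
  shows "(\<integral>x. (\<Sum>i. \<gamma> ^ i * f i x) \<partial>M) = (\<Sum>i. \<gamma> ^ i * (\<integral>x. f i x \<partial>M))"
proof -
  interpret prob_space M by fact
  have s1: "summable (\<lambda>i. C * \<gamma> ^ i)" using gam by (intro summable_mult summable_geometric) auto
  have bb: "\<bar>\<gamma> ^ i * f i x\<bar> \<le> C" if "x \<in> space M" for i x
  proof -
    have "\<gamma> ^ i \<le> 1" using gam by (simp add: power_le_one)
    then have "\<gamma> ^ i * \<bar>f i x\<bar> \<le> 1 * \<bar>f i x\<bar>" by (intro mult_right_mono) auto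
    then show ?thesis using fb[OF that, of i] gam by (simp add: abs_mult)
  qed
  have i1: "integrable M (\<lambda>x. \<gamma> ^ i * f i x)" for i
    using bb by (intro intgr[OF M, where C=C] borel_measurable_times measurable_const fm) auto
  have "(\<integral>x. (\<Sum>i. \<gamma> ^ i * f i x) \<partial>M) = (\<Sum>i. (\<integral>x. \<gamma> ^ i * f i x \<partial>M))"
  proof (rule integral_suminf[OF i1])
    show "AE x in M. summable (\<lambda>i. norm (\<gamma> ^ i * f i x))"
    proof (rule AE_I2)
      fix x assume x: "x \<in> space M"
      show "summable (\<lambda>i. norm (\<gamma> ^ i * f i x))"
        by (rule summable_comparison_test[OF _ s1]) (use geo_term_bnd[OF fb[OF x]] in auto)
    qed
    show "summable (\<lambda>i. \<integral>x. norm (\<gamma> ^ i * f i x) \<partial>M)"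
    proof (rule summable_comparison_test[OF _ s1], intro exI allI impI)
      fix i :: nat
      have "(\<integral>x. norm (\<gamma> ^ i * f i x) \<partial>M) \<le> C * \<gamma> ^ i"
        by (rule integral_le_const) (use i1[of i] geo_term_bnd[OF fb] in auto)
      then show "norm (\<integral>x. norm (\<gamma> ^ i * f i x) \<partial>M) \<le> C * \<gamma> ^ i" by simp
    qed
  qed
  then show ?thesis by simp
qed

end


lemma AE_le1:
  assumes "\<And>y. y \<in> space M \<Longrightarrow> K y \<in> space (prob_algebra N)"
  shows "AE y in M. emeasure (K y) (space (K y)) \<le> ennreal 1"
proof (rule AE_I2)
  fix y assume "y \<in> space M"
  from prob_meas_facts(1)[OF assms[OF this]] show "emeasure (K y) (space (K y)) \<le> ennreal 1"
    by (simp add: prob_space.emeasure_space_1)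
qed

context dm begin

lemma space_aug: "x \<in> space (aug_space S n) \<longleftrightarrow> fst x \<in> space S \<and> snd x \<in> space (act_space n)"
  unfolding aug_space_def by (cases x) (simp add: space_pair_measure)

lemma restrict_act: "restrict f {..<m} \<in> space (act_space m)"
  unfolding act_space_def by (simp add: space_PiM)

lemma pair_meas: "c \<in> space (act_space m) \<Longrightarrow> (\<lambda>s'. (s', c)) \<in> S \<rightarrow>\<^sub>M aug_space S m"
  unfolding aug_space_def by simp

lemma roll_cong: "(\<And>i. i < k \<Longrightarrow> as i = bs i) \<Longrightarrow> roll S P s as k = roll S P s bs k"
  by (induction k) auto

lemma roll_meas1: "(\<lambda>s. roll S P s as k) \<in> S \<rightarrow>\<^sub>M prob_algebra S"
  using roll_meas[of "\<lambda>s. s" S k "\<lambda>_. as"] by simp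

lemma roll_space: "s \<in> space S \<Longrightarrow> roll S P s as k \<in> space (prob_algebra S)"
  by (rule measurable_space[OF roll_meas1])

lemma roll_facts:
  assumes "s \<in> space S"
  shows "prob_space (roll S P s as k)" "sets (roll S P s as k) = sets S" "space (roll S P s as k) = space S"
  using prob_meas_facts[OF roll_space[OF assms, of as k]] by auto

lemma Pc_meas: "(\<lambda>s. P s c) \<in> S \<rightarrow>\<^sub>M prob_algebra S"
  using P_meas[of "\<lambda>s. s" S "\<lambda>_. c"] by simp

lemma roll_add:
  assumes s: "s \<in> space S"
  shows "roll S P s as (j + k) = bind (roll S P s as j) (\<lambda>s'. roll S P s' (\<lambda>i. as (i + j)) k)"
proof (induction k)
  case 0
  have "bind (roll S P s as j) (\<lambda>s'. roll S P s' (\<lambda>i. as (i + j)) 0) = bind (roll S P s as j) (return S)"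
    by simp
  also have "\<dots> = roll S P s as j" by (rule bind_return'') (rule roll_facts(2)[OF s])
  finally show ?case by simp
next
  case (Suc k)
  have "roll S P s as (j + Suc k) = bind (roll S P s as (j + k)) (\<lambda>s'. P s' (as (j + k)))" by simp
  also have "\<dots> = bind (bind (roll S P s as j) (\<lambda>s'. roll S P s' (\<lambda>i. as (i + j)) k)) (\<lambda>s'. P s' (as (j + k)))"
    using Suc by simp
  also have "\<dots> = bind (roll S P s as j) (\<lambda>s'. bind (roll S P s' (\<lambda>i. as (i + j)) k) (\<lambda>s'. P s' (as (j + k))))"
    by (rule bind_assoc) (auto intro: measurable_prob_algebraD[OF roll_meas1] measurable_prob_algebraD[OF Pc_meas]
        simp: measurable_cong_sets[OF roll_facts(2)[OF s] refl])
  also have "\<dots> = bind (roll S P s as j) (\<lambda>s'. roll S P s' (\<lambda>i. as (i + j)) (Suc k))"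
    by (simp add: add.commute)
  finally show ?case .
qed

lemma roll_1: "s \<in> space S \<Longrightarrow> roll S P s as 1 = P s (as 0)"
  using bind_return[OF measurable_prob_algebraD[OF Pc_meas[of "as 0"]]] by simp

lemma db_facts:
  assumes "x \<in> space (aug_space S n)" "m \<le> n"
  shows "prob_space (delayed_belief S P n m x)" "sets (delayed_belief S P n m x) = sets (aug_space S m)"
    "space (delayed_belief S P n m x) = space (aug_space S m)"
  using prob_meas_facts[OF measurable_space[OF db_meas[OF assms(2)] assms(1)]] by auto

lemma ck_meas: "(\<lambda>x. cd_kernel S P n x a) \<in> aug_space S n \<rightarrow>\<^sub>M prob_algebra (aug_space S n)"
  using measurable_compose[OF _ cd_kernel_meas, of "\<lambda>x. (x, a)"] by simp

lemma ck_facts: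
  assumes "x \<in> space (aug_space S n)"
  shows "prob_space (cd_kernel S P n x a)" "sets (cd_kernel S P n x a) = sets (aug_space S n)"
    "space (cd_kernel S P n x a) = space (aug_space S n)"
  using prob_meas_facts[OF measurable_space[OF ck_meas assms]] by auto

lemma R_meas1: "(\<lambda>s. R s a) \<in> borel_measurable S"
  using measurable_compose[OF _ R_meas, of "\<lambda>s. (s, a)"] by simp

lemma cr_meas1: "(\<lambda>x. cd_reward S P R n x a) \<in> borel_measurable (aug_space S n)"
  using measurable_compose[OF _ cd_reward_meas, of "\<lambda>x. (x, a)"] by simp

lemma reward_consistent:
  assumes x: "x \<in> space (aug_space S n)" and mn: "m \<le> n"
  shows "(\<integral>xt. cd_reward S P R m xt a \<partial>delayed_belief S P n m x) = cd_reward S P R n x a"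
proof -
  obtain s as where xs: "x = (s, as)" by (cases x)
  have s: "s \<in> space S" using x space_aug[of x n] xs by simp
  define acts where "acts = restrict (\<lambda>i. as (i + (n - m))) {..<m}"
  have "(\<integral>xt. cd_reward S P R m xt a \<partial>delayed_belief S P n m x)
      = (\<integral>s'. cd_reward S P R m (s', acts) a \<partial>roll S P s as (n - m))"
    unfolding delayed_belief_def xs acts_def fst_conv snd_conv
    by (rule integral_distr) (auto simp: measurable_cong_sets[OF roll_facts(2)[OF s] refl]
        intro!: pair_meas restrict_act cr_meas1)
  also have "\<dots> = (\<integral>s'. (\<integral>s''. R s'' a \<partial>roll S P s' (\<lambda>i. as (i + (n - m))) m) \<partial>roll S P s as (n - m))"
  proof (rule Bochner_Integration.integral_cong[OF refl])
    fix s'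
    have rc: "roll S P s' acts m = roll S P s' (\<lambda>i. as (i + (n - m))) m"
      unfolding acts_def by (rule roll_cong) simp
    show "cd_reward S P R m (s', acts) a = (\<integral>s''. R s'' a \<partial>roll S P s' (\<lambda>i. as (i + (n - m))) m)"
      by (simp add: cd_reward_def belief_def rc)
  qed
  also have "\<dots> = (\<integral>s''. R s'' a \<partial>bind (roll S P s as (n - m)) (\<lambda>s'. roll S P s' (\<lambda>i. as (i + (n - m))) m))"
  proof (rule integral_bind[where B=B and K=S and B'=1, symmetric])
    show "(\<lambda>s'. roll S P s' (\<lambda>i. as (i + (n - m))) m) \<in> roll S P s as (n - m) \<rightarrow>\<^sub>M subprob_algebra S"
      by (simp add: measurable_cong_sets[OF roll_facts(2)[OF s] refl] measurable_prob_algebraD[OF roll_meas1])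
    show "finite_measure (roll S P s as (n - m))" using roll_facts(1)[OF s] prob_space_def by blast
    show "AE x in roll S P s as (n - m). emeasure (roll S P x (\<lambda>i. as (i + (n - m))) m) (space (roll S P x (\<lambda>i. as (i + (n - m))) m)) \<le> ennreal 1"
      by (rule AE_le1[where N=S]) (simp add: roll_facts(3)[OF s] roll_space)
  qed (auto simp: R_meas1 R_bnd)
  also have "\<dots> = cd_reward S P R n x a"
    unfolding cd_reward_def belief_def xs using roll_add[OF s, of as "n - m" m, symmetric] mn by simp
  finally show ?thesis .
qed

lemma trans_consistent:
  assumes x: "x \<in> space (aug_space S n)" and mn: "m \<le> n"
  shows "bind (delayed_belief S P n m x) (\<lambda>xt. cd_kernel S P m xt a)
       = bind (cd_kernel S P n x a) (delayed_belief S P n m)"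
proof -
  obtain s as where xs: "x = (s, as)" by (cases x)
  have s: "s \<in> space S" using x space_aug[of x n] xs by simp
  define as' where "as' = ext_act n as a"
  define acts where "acts = restrict (\<lambda>i. as (i + (n - m))) {..<m}"
  define g where "g = (\<lambda>s'' :: 's. (s'', restrict (\<lambda>i. as' (i + (n - m + 1))) {..<m}))"
  have gm: "g \<in> S \<rightarrow>\<^sub>M aug_space S m" unfolding g_def by (intro pair_meas restrict_act)
  have R0: "roll S P s as (n - m) = roll S P s as' (n - m)"
    by (rule roll_cong) (auto simp: as'_def ext_act_def)
  have "bind (delayed_belief S P n m x) (\<lambda>xt. cd_kernel S P m xt a)
      = bind (roll S P s as (n - m)) (\<lambda>s'. cd_kernel S P m (s', acts) a)"
    unfolding delayed_belief_def xs acts_def snd_conv fst_conv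
  proof (rule bind_distr)
    show "(\<lambda>s'. (s', restrict (\<lambda>i. as (i + (n - m))) {..<m})) \<in> roll S P s as (n - m) \<rightarrow>\<^sub>M aug_space S m"
      by (simp add: measurable_cong_sets[OF roll_facts(2)[OF s] refl] pair_meas restrict_act)
    show "(\<lambda>xt. cd_kernel S P m xt a) \<in> aug_space S m \<rightarrow>\<^sub>M subprob_algebra (aug_space S m)"
      by (rule measurable_prob_algebraD[OF ck_meas])
    show "space (roll S P s as (n - m)) \<noteq> {}" using roll_facts(3)[OF s] s by auto
  qed
  also have "\<dots> = bind (roll S P s as (n - m)) (\<lambda>s'. distr (P s' (as' (n - m))) (aug_space S m) g)"
  proof (rule bind_cong[OF refl])
    fix s' assume "s' \<in> space (roll S P s as (n - m))"
    have e0: "ext_act m acts a 0 = as' (n - m)"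
      using mn by (auto simp: ext_act_def acts_def as'_def)
    have e1: "restrict (\<lambda>i. ext_act m acts a (i + 1)) {..<m} = restrict (\<lambda>i. as' (i + (n - m + 1))) {..<m}"
    proof -
      have le: "\<And>x. m \<le> x + n" using mn by auto
      show ?thesis using mn by (auto simp: ext_act_def acts_def as'_def restrict_def fun_eq_iff Suc_diff_le le)
    qed
    show "cd_kernel S P m (s', acts) a = distr (P s' (as' (n - m))) (aug_space S m) g"
      unfolding cd_kernel_def g_def fst_conv snd_conv e0 e1 ..
  qed
  also have "\<dots> = distr (bind (roll S P s as (n - m)) (\<lambda>s'. P s' (as' (n - m)))) (aug_space S m) g"
    by (rule distr_bind[where K=S, symmetric]) (use s gm in \<open>auto simp: measurable_cong_sets[OF roll_facts(2)[OF s] refl]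
        roll_facts(3)[OF s] intro: measurable_prob_algebraD[OF Pc_meas]\<close>)
  also have "bind (roll S P s as (n - m)) (\<lambda>s'. P s' (as' (n - m))) = roll S P s as' (1 + (n - m))"
    by (simp add: R0)
  finally have L: "bind (delayed_belief S P n m x) (\<lambda>xt. cd_kernel S P m xt a)
      = distr (roll S P s as' (1 + (n - m))) (aug_space S m) g" .
  define k where "k = (\<lambda>s' :: 's. (s', restrict (\<lambda>i. as' (i + 1)) {..<n}))"
  have km: "k \<in> S \<rightarrow>\<^sub>M aug_space S n" unfolding k_def by (intro pair_meas restrict_act)
  have P0: "P s (as' 0) \<in> space (prob_algebra S)" by (rule measurable_space[OF Pc_meas s])
  have "bind (cd_kernel S P n x a) (delayed_belief S P n m) = bind (P s (as' 0)) (\<lambda>s'. delayed_belief S P n m (k s'))"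
    unfolding cd_kernel_def xs fst_conv snd_conv as'_def[symmetric] k_def[symmetric]
  proof (rule bind_distr)
    show "k \<in> P s (as' 0) \<rightarrow>\<^sub>M aug_space S n"
      using km by (simp add: measurable_cong_sets[OF prob_meas_facts(2)[OF P0] refl])
    show "delayed_belief S P n m \<in> aug_space S n \<rightarrow>\<^sub>M subprob_algebra (aug_space S m)"
      using measurable_prob_algebraD[OF db_meas[OF mn]] by simp
    show "space (P s (as' 0)) \<noteq> {}" using prob_meas_facts(3)[OF P0] s by auto
  qed
  also have "\<dots> = bind (P s (as' 0)) (\<lambda>s'. distr (roll S P s' (\<lambda>i. as' (i + 1)) (n - m)) (aug_space S m) g)"
  proof (rule bind_cong[OF refl])
    fix s' assume "s' \<in> space (P s (as' 0))"
    have r: "roll S P s' (restrict (\<lambda>i. as' (i + 1)) {..<n}) (n - m) = roll S P s' (\<lambda>i. as' (i + 1)) (n - m)"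
      by (rule roll_cong) auto
    have e: "restrict (\<lambda>i. restrict (\<lambda>i. as' (i + 1)) {..<n} (i + (n - m))) {..<m}
        = restrict (\<lambda>i. as' (i + (n - m + 1))) {..<m}"
      using mn by (auto simp: restrict_def fun_eq_iff)
    show "delayed_belief S P n m (k s') = distr (roll S P s' (\<lambda>i. as' (i + 1)) (n - m)) (aug_space S m) g"
      unfolding delayed_belief_def k_def g_def fst_conv snd_conv r e ..
  qed
  also have "\<dots> = distr (bind (P s (as' 0)) (\<lambda>s'. roll S P s' (\<lambda>i. as' (i + 1)) (n - m))) (aug_space S m) g"
    by (rule distr_bind[where K=S, symmetric]) (insert s, auto simp: measurable_cong_sets[OF prob_meas_facts(2)[OF P0] refl]
        measurable_prob_algebraD[OF roll_meas1] prob_meas_facts(3)[OF P0] gm)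
  also have "bind (P s (as' 0)) (\<lambda>s'. roll S P s' (\<lambda>i. as' (i + 1)) (n - m)) = roll S P s as' (1 + (n - m))"
    using roll_add[OF s, of as' 1 "n - m"] roll_1[OF s, of as'] by simp
  finally show ?thesis using L by simp
qed

end


locale dmp = dm S P R \<gamma> B for S :: "'s measure" and P :: "'s \<Rightarrow> 'a::metric_space \<Rightarrow> 's measure"
    and R \<gamma> B +
  fixes n :: nat and pol :: "('s \<times> (nat \<Rightarrow> 'a)) \<Rightarrow> 'a measure"
  assumes pol: "pol \<in> aug_space S n \<rightarrow>\<^sub>M prob_algebra borel"
begin

abbreviation "ASB \<equiv> aug_space S n \<Otimes>\<^sub>M (borel :: 'a measure)"
abbreviation "sa \<equiv> sa_step S P n pol"

definition "trajK z i = traj S P n pol (return ASB z) i"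

lemma sa_meas: "sa \<in> ASB \<rightarrow>\<^sub>M prob_algebra ASB"
  by (rule sa_step_meas[OF pol])

lemma sa_meas': "sa \<in> ASB \<rightarrow>\<^sub>M subprob_algebra ASB"
  by (rule measurable_prob_algebraD[OF sa_meas])

lemma traj_shift: "traj S P n pol mu0 (Suc i) = traj S P n pol (bind mu0 sa) i"
  by (induction i) simp_all

lemma trajK_meas: "(\<lambda>z. trajK z i) \<in> ASB \<rightarrow>\<^sub>M prob_algebra ASB"
proof (induction i)
  case 0 show ?case by (simp add: trajK_def)
next
  case (Suc i)
  have "(\<lambda>z. bind (trajK z i) sa) \<in> ASB \<rightarrow>\<^sub>M prob_algebra ASB"
    by (rule measurable_bind_prob_space[OF Suc sa_meas])
  then show ?case by (simp add: trajK_def)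
qed

lemma traj_bind:
  assumes mu: "mu0 \<in> space (prob_algebra ASB)"
  shows "traj S P n pol mu0 i = bind mu0 (\<lambda>z. trajK z i)"
proof (induction i)
  case 0
  have "sets mu0 = sets ASB" using mu by (simp add: space_prob_algebra)
  then show ?case by (simp add: trajK_def bind_return'')
next
  case (Suc i)
  have "traj S P n pol mu0 (Suc i) = bind (bind mu0 (\<lambda>z. trajK z i)) sa"
    using Suc by simp
  also have "\<dots> = bind mu0 (\<lambda>z. bind (trajK z i) sa)"
  proof (rule bind_assoc[OF _ sa_meas'])
    show "(\<lambda>z. trajK z i) \<in> mu0 \<rightarrow>\<^sub>M subprob_algebra ASB"
      using measurable_prob_algebraD[OF trajK_meas]
      by (simp add: measurable_cong_sets[OF prob_meas_facts(2)[OF mu] refl])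
  qed
  also have "\<dots> = bind mu0 (\<lambda>z. trajK z (Suc i))" by (simp add: trajK_def)
  finally show ?case .
qed

lemma trajK_Suc:
  assumes z: "z \<in> space ASB"
  shows "trajK z (Suc i) = bind (sa z) (\<lambda>z'. trajK z' i)"
proof -
  have "trajK z (Suc i) = traj S P n pol (bind (return ASB z) sa) i"
    unfolding trajK_def by (rule traj_shift)
  also have "bind (return ASB z) sa = sa z" by (rule bind_return[OF sa_meas' z])
  also have "traj S P n pol (sa z) i = bind (sa z) (\<lambda>z'. trajK z' i)"
    by (rule traj_bind) (rule measurable_space[OF sa_meas z])
  finally show ?thesis .
qed

definition "rw z = cd_reward S P R n (fst z) (snd z)"

lemma rw_meas: "rw \<in> borel_measurable ASB"
  unfolding rw_def[abs_def] by (rule cd_reward_meas)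

lemma rw_bnd: "z \<in> space ASB \<Longrightarrow> \<bar>rw z\<bar> \<le> B"
  unfolding rw_def by (rule cd_reward_bnd) (auto simp: space_pair_measure)

definition "phi i z = (\<integral>z'. rw z' \<partial>trajK z i)"

lemma trajK_facts:
  assumes "z \<in> space ASB"
  shows "prob_space (trajK z i)" "sets (trajK z i) = sets ASB" "space (trajK z i) = space ASB"
  using prob_meas_facts[OF measurable_space[OF trajK_meas assms]] by auto

lemma sa_facts:
  assumes "z \<in> space ASB"
  shows "prob_space (sa z)" "sets (sa z) = sets ASB" "space (sa z) = space ASB"
  using prob_meas_facts[OF measurable_space[OF sa_meas assms]] by auto

lemma phi_meas: "phi i \<in> borel_measurable ASB"
  unfolding phi_def[abs_def]
  by (rule measurable_compose[OF measurable_prob_algebraD[OF trajK_meas] integral_measurable_subprob_algebra[OF rw_meas]])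

lemma phi_bnd: "z \<in> space ASB \<Longrightarrow> \<bar>phi i z\<bar> \<le> B"
  unfolding phi_def
  by (rule int_bnd) (auto simp: trajK_facts measurable_cong_sets[OF trajK_facts(2) refl] rw_meas rw_bnd)

lemma phi_0: "z \<in> space ASB \<Longrightarrow> phi 0 z = rw z"
  unfolding phi_def trajK_def by (simp add: integral_return rw_meas)

lemma phi_Suc:
  assumes z: "z \<in> space ASB"
  shows "phi (Suc i) z = (\<integral>z'. phi i z' \<partial>sa z)"
proof -
  have "phi (Suc i) z = (\<integral>z'. rw z' \<partial>bind (sa z) (\<lambda>z'. trajK z' i))"
    unfolding phi_def trajK_Suc[OF z] ..
  also have "\<dots> = (\<integral>z'. phi i z' \<partial>sa z)"
    unfolding phi_def
  proof (rule integral_bind[where B=B and K=ASB and B'=1])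
    show "(\<lambda>z. trajK z i) \<in> sa z \<rightarrow>\<^sub>M subprob_algebra ASB"
      using measurable_prob_algebraD[OF trajK_meas]
      by (simp add: measurable_cong_sets[OF sa_facts(2)[OF z] refl])
    show "finite_measure (sa z)" using sa_facts[OF z] prob_space_def by blast
    show "AE x in sa z. emeasure (trajK x i) (space (trajK x i)) \<le> ennreal 1"
      by (rule AE_le1[where N=ASB]) (simp add: sa_facts[OF z] measurable_space[OF trajK_meas])
  qed (auto simp: rw_meas rw_bnd)
  finally show ?thesis .
qed

definition "Qf z = Q_fun S P R \<gamma> n pol (fst z) (snd z)"

lemma Qf_eq: "Qf z = (\<Sum>i. \<gamma> ^ i * phi i z)"
  unfolding Qf_def Q_fun_def phi_def trajK_def rw_def by simp

lemma Qf_meas: "Qf \<in> borel_measurable ASB"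
  unfolding Qf_eq[abs_def] using phi_meas by measurable

lemma Qf_bnd: "z \<in> space ASB \<Longrightarrow> \<bar>Qf z\<bar> \<le> B / (1 - \<gamma>)"
  unfolding Qf_eq by (rule geo_bnd) (rule phi_bnd)

lemma Qf_bellman:
  assumes z: "z \<in> space ASB"
  shows "Qf z = rw z + \<gamma> * (\<integral>z'. Qf z' \<partial>sa z)"
proof -
  have sm: "summable (\<lambda>i. \<gamma> ^ i * phi i z)" by (rule geo_summable) (rule phi_bnd[OF z])
  have "Qf z = (\<Sum>i. \<gamma> ^ Suc i * phi (Suc i) z) + \<gamma> ^ 0 * phi 0 z"
    unfolding Qf_eq using suminf_split_head[OF sm] by simp
  also have "(\<Sum>i. \<gamma> ^ Suc i * phi (Suc i) z) = \<gamma> * (\<Sum>i. \<gamma> ^ i * (\<integral>z'. phi i z' \<partial>sa z))"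
    unfolding phi_Suc[OF z] 
    by (subst suminf_mult[symmetric]) (auto intro!: geo_summable int_bnd phi_meas phi_bnd
        simp: sa_facts[OF z] measurable_cong_sets[OF sa_facts(2)[OF z] refl] mult.assoc)
  also have "(\<Sum>i. \<gamma> ^ i * (\<integral>z'. phi i z' \<partial>sa z)) = (\<integral>z'. Qf z' \<partial>sa z)"
    unfolding Qf_eq
    by (rule int_suminf[symmetric]) (auto intro!: phi_meas phi_bnd
        simp: sa_facts[OF z] measurable_cong_sets[OF sa_facts(2)[OF z] refl])
  finally show ?thesis using phi_0[OF z] by simp
qed

abbreviation "mu x' \<equiv> distr (pol x') ASB (\<lambda>a'. (x', a'))"

lemma mu_meas: "(\<lambda>x'. mu x') \<in> aug_space S n \<rightarrow>\<^sub>M prob_algebra ASB"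
  by (rule measurable_distr_prob_space2[OF pol]) simp

lemma pol_facts:
  assumes "x' \<in> space (aug_space S n)"
  shows "prob_space (pol x')" "sets (pol x') = sets borel" "space (pol x') = UNIV"
  using prob_meas_facts[OF measurable_space[OF pol assms]] by auto

lemma mu_facts:
  assumes "x' \<in> space (aug_space S n)"
  shows "prob_space (mu x')" "sets (mu x') = sets ASB" "space (mu x') = space ASB"
  using prob_meas_facts[OF measurable_space[OF mu_meas assms]] by auto

lemma Pair_meas: "x' \<in> space (aug_space S n) \<Longrightarrow> (\<lambda>a'. (x', a')) \<in> pol x' \<rightarrow>\<^sub>M ASB"
  by (simp add: measurable_cong_sets[OF pol_facts(2) refl])

lemma int_mu:
  fixes G :: "_ \<Rightarrow> real"
  assumes x': "x' \<in> space (aug_space S n)" and G: "G \<in> borel_measurable ASB"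
  shows "(\<integral>z. G z \<partial>mu x') = (\<integral>a'. G (x', a') \<partial>pol x')"
  by (rule integral_distr[OF Pair_meas[OF x'] G])

lemma nn_mu:
  fixes G :: "_ \<Rightarrow> ennreal"
  assumes x': "x' \<in> space (aug_space S n)" and G: "G \<in> borel_measurable ASB"
  shows "(\<integral>\<^sup>+z. G z \<partial>mu x') = (\<integral>\<^sup>+a'. G (x', a') \<partial>pol x')"
  by (rule nn_integral_distr[OF Pair_meas[OF x']]) (simp add: G)

lemma ck_z_facts:
  assumes z: "z \<in> space ASB"
  shows "prob_space (cd_kernel S P n (fst z) (snd z))" "sets (cd_kernel S P n (fst z) (snd z)) = sets (aug_space S n)"
    "space (cd_kernel S P n (fst z) (snd z)) = space (aug_space S n)"
  using ck_facts[of "fst z" n "snd z"] z by (auto simp: space_pair_measure)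

lemma sa_int:
  fixes G :: "_ \<Rightarrow> real"
  assumes z: "z \<in> space ASB" and G: "G \<in> borel_measurable ASB" and Gb: "\<And>z. z \<in> space ASB \<Longrightarrow> \<bar>G z\<bar> \<le> C"
  shows "(\<integral>z'. G z' \<partial>sa z) = (\<integral>x'. (\<integral>a'. G (x', a') \<partial>pol x') \<partial>cd_kernel S P n (fst z) (snd z))"
proof -
  have "(\<integral>z'. G z' \<partial>sa z) = (\<integral>x'. (\<integral>z'. G z' \<partial>mu x') \<partial>cd_kernel S P n (fst z) (snd z))"
    unfolding sa_step_def
  proof (rule integral_bind[where B=C and K=ASB and B'=1])
    show "(\<lambda>x'. mu x') \<in> cd_kernel S P n (fst z) (snd z) \<rightarrow>\<^sub>M subprob_algebra ASB"
      using measurable_prob_algebraD[OF mu_meas] by (simp add: measurable_cong_sets[OF ck_z_facts(2)[OF z] refl])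
    show "finite_measure (cd_kernel S P n (fst z) (snd z))" using ck_z_facts[OF z] prob_space_def by blast
    show "AE x in cd_kernel S P n (fst z) (snd z). emeasure (mu x) (space (mu x)) \<le> ennreal 1"
      by (rule AE_le1[where N=ASB]) (simp add: ck_z_facts[OF z] measurable_space[OF mu_meas])
  qed (auto simp: G Gb)
  also have "\<dots> = (\<integral>x'. (\<integral>a'. G (x', a') \<partial>pol x') \<partial>cd_kernel S P n (fst z) (snd z))"
    by (rule Bochner_Integration.integral_cong[OF refl]) (simp add: ck_z_facts[OF z] int_mu G)
  finally show ?thesis .
qed

lemma sa_nn:
  fixes G :: "_ \<Rightarrow> ennreal"
  assumes z: "z \<in> space ASB" and G: "G \<in> borel_measurable ASB"
  shows "(\<integral>\<^sup>+z'. G z' \<partial>sa z) = (\<integral>\<^sup>+x'. (\<integral>\<^sup>+a'. G (x', a') \<partial>pol x') \<partial>cd_kernel S P n (fst z) (snd z))"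
proof -
  have "(\<integral>\<^sup>+z'. G z' \<partial>sa z) = (\<integral>\<^sup>+x'. (\<integral>\<^sup>+z'. G z' \<partial>mu x') \<partial>cd_kernel S P n (fst z) (snd z))"
    unfolding sa_step_def
    by (rule nn_integral_bind[OF G]) 
      (use measurable_prob_algebraD[OF mu_meas] in \<open>simp add: measurable_cong_sets[OF ck_z_facts(2)[OF z] refl]\<close>)
  also have "\<dots> = (\<integral>\<^sup>+x'. (\<integral>\<^sup>+a'. G (x', a') \<partial>pol x') \<partial>cd_kernel S P n (fst z) (snd z))"
    by (rule nn_integral_cong) (simp add: ck_z_facts[OF z] nn_mu G)
  finally show ?thesis .
qed

lemma traj_space: "mu0 \<in> space (prob_algebra ASB) \<Longrightarrow> traj S P n pol mu0 i \<in> space (prob_algebra ASB)"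
proof (induction i)
  case (Suc i)
  then show ?case
    using prob_space_bind'[OF Suc.IH sa_meas] sets_bind'[OF Suc.IH sa_meas]
    by (simp add: space_prob_algebra)
qed simp

end



context dmp begin

lemma trajmu_meas: "(\<lambda>x'. traj S P n pol (mu x') j) \<in> aug_space S n \<rightarrow>\<^sub>M prob_algebra ASB"
proof -
  have m: "(\<lambda>x'. bind (mu x') (\<lambda>z. trajK z j)) \<in> aug_space S n \<rightarrow>\<^sub>M prob_algebra ASB"
    by (rule measurable_bind_prob_space[OF mu_meas trajK_meas])
  show ?thesis
    by (rule measurable_cong[THEN iffD1, OF _ m]) (simp add: traj_bind[symmetric] measurable_space[OF mu_meas])
qed

lemma fstA_meas: "fst \<in> ASB \<rightarrow>\<^sub>M aug_space S n" by simp

lemma chain_nn: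
  fixes h :: "_ \<Rightarrow> ennreal"
  assumes x: "x \<in> space (aug_space S n)" and h: "h \<in> borel_measurable ASB"
  shows "(\<integral>\<^sup>+ a. (\<integral>\<^sup>+ x'. (\<integral>\<^sup>+ z. h z \<partial>traj S P n pol (mu x') j) \<partial>cd_kernel S P n x a) \<partial>pol x)
       = (\<integral>\<^sup>+ z. h z \<partial>traj S P n pol (mu x) (Suc j))"
proof -
  define \<psi> where "\<psi> z = (\<integral>\<^sup>+ z'. h z' \<partial>trajK z j)" for z
  have \<psi>m: "\<psi> \<in> borel_measurable ASB"
    unfolding \<psi>_def[abs_def]
    by (rule measurable_compose[OF measurable_prob_algebraD[OF trajK_meas] nn_integral_measurable_subprob_algebra[OF h]])
  have inner: "(\<integral>\<^sup>+ z. h z \<partial>traj S P n pol (mu x') j) = (\<integral>\<^sup>+ a'. \<psi> (x', a') \<partial>pol x')"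
    if x': "x' \<in> space (aug_space S n)" for x'
  proof -
    have "traj S P n pol (mu x') j = bind (mu x') (\<lambda>z. trajK z j)"
      by (rule traj_bind) (rule measurable_space[OF mu_meas x'])
    then have "(\<integral>\<^sup>+ z. h z \<partial>traj S P n pol (mu x') j) = (\<integral>\<^sup>+ z. \<psi> z \<partial>mu x')"
      unfolding \<psi>_def
      by (simp add: nn_integral_bind[OF h] measurable_cong_sets[OF mu_facts(2)[OF x'] refl]
          measurable_prob_algebraD[OF trajK_meas])
    also have "\<dots> = (\<integral>\<^sup>+ a'. \<psi> (x', a') \<partial>pol x')" by (rule nn_mu[OF x' \<psi>m])
    finally show ?thesis .
  qed
  have xa: "(x, a) \<in> space ASB" for a using x by (simp add: space_pair_measure)
  have "(\<integral>\<^sup>+ a. (\<integral>\<^sup>+ x'. (\<integral>\<^sup>+ z. h z \<partial>traj S P n pol (mu x') j) \<partial>cd_kernel S P n x a) \<partial>pol x)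
      = (\<integral>\<^sup>+ a. (\<integral>\<^sup>+ x'. (\<integral>\<^sup>+ a'. \<psi> (x', a') \<partial>pol x') \<partial>cd_kernel S P n x a) \<partial>pol x)"
    by (intro nn_integral_cong) (simp add: inner ck_facts[OF x])
  also have "\<dots> = (\<integral>\<^sup>+ a. (\<integral>\<^sup>+ z'. \<psi> z' \<partial>sa (x, a)) \<partial>pol x)"
    by (intro nn_integral_cong) (simp add: sa_nn[OF xa \<psi>m])
  also have "\<dots> = (\<integral>\<^sup>+ z0. (\<integral>\<^sup>+ z'. \<psi> z' \<partial>sa z0) \<partial>mu x)"
    by (rule nn_mu[OF x, symmetric])
      (rule measurable_compose[OF sa_meas' nn_integral_measurable_subprob_algebra[OF \<psi>m]])
  also have "\<dots> = (\<integral>\<^sup>+ z'. \<psi> z' \<partial>bind (mu x) sa)"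
    by (rule nn_integral_bind[OF \<psi>m, symmetric])
      (simp add: measurable_cong_sets[OF mu_facts(2)[OF x] refl] sa_meas')
  also have "\<dots> = (\<integral>\<^sup>+ z. h z \<partial>bind (bind (mu x) sa) (\<lambda>z. trajK z j))"
    unfolding \<psi>_def
  proof (rule nn_integral_bind[OF h, symmetric])
    have "bind (mu x) sa \<in> space (prob_algebra ASB)"
      using prob_space_bind'[OF measurable_space[OF mu_meas x] sa_meas] sets_bind'[OF measurable_space[OF mu_meas x] sa_meas]
      by (simp add: space_prob_algebra)
    then show "(\<lambda>z. trajK z j) \<in> bind (mu x) sa \<rightarrow>\<^sub>M subprob_algebra ASB"
      by (simp add: measurable_cong_sets[OF prob_meas_facts(2) refl] measurable_prob_algebraD[OF trajK_meas])
  qed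
  also have "bind (bind (mu x) sa) (\<lambda>z. trajK z j) = traj S P n pol (mu x) (Suc j)"
  proof -
    have "bind (mu x) sa \<in> space (prob_algebra ASB)"
      using prob_space_bind'[OF measurable_space[OF mu_meas x] sa_meas] sets_bind'[OF measurable_space[OF mu_meas x] sa_meas]
      by (simp add: space_prob_algebra)
    then have "traj S P n pol (bind (mu x) sa) j = bind (bind (mu x) sa) (\<lambda>z. trajK z j)" by (rule traj_bind)
    then show ?thesis unfolding traj_shift by (rule sym)
  qed
  finally show ?thesis .
qed

lemma vis_nn:
  fixes f :: "_ \<Rightarrow> ennreal"
  assumes x': "x' \<in> space (aug_space S n)" and f: "f \<in> borel_measurable (aug_space S n)"
  shows "(\<integral>\<^sup>+ xh. f xh \<partial>visitation S P \<gamma> n pol x')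
       = (\<Sum>j. ennreal ((1 - \<gamma>) * \<gamma> ^ j) * (\<integral>\<^sup>+ z. f (fst z) \<partial>traj S P n pol (mu x') j))"
proof -
  have sl: "state_law S P n pol x' j \<in> space (prob_algebra (aug_space S n))" for j
    unfolding state_law_def
    by (rule measurable_space[OF measurable_distr_prob_space[OF fstA_meas]])
      (rule traj_space[OF measurable_space[OF mu_meas x']])
  have "(\<integral>\<^sup>+ xh. f xh \<partial>visitation S P \<gamma> n pol x')
      = (\<integral>\<^sup>+ j. (\<integral>\<^sup>+ xh. f xh \<partial>state_law S P n pol x' j) \<partial>measure_pmf (geometric_pmf (1 - \<gamma>)))"
    unfolding visitation_def
  proof (rule nn_integral_bind[OF f])
    show "state_law S P n pol x' \<in> measure_pmf (geometric_pmf (1 - \<gamma>)) \<rightarrow>\<^sub>M subprob_algebra (aug_space S n)"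
      using sl by (auto simp: space_prob_algebra space_subprob_algebra prob_space_imp_subprob_space)
  qed
  also have "\<dots> = (\<Sum>j. ennreal (pmf (geometric_pmf (1 - \<gamma>)) j) * (\<integral>\<^sup>+ xh. f xh \<partial>state_law S P n pol x' j))"
    by (simp add: nn_integral_measure_pmf nn_integral_count_space_nat)
  also have "\<dots> = (\<Sum>j. ennreal ((1 - \<gamma>) * \<gamma> ^ j) * (\<integral>\<^sup>+ z. f (fst z) \<partial>traj S P n pol (mu x') j))"
  proof (rule suminf_cong)
    fix j
    have "pmf (geometric_pmf (1 - \<gamma>)) j = (1 - \<gamma>) * \<gamma> ^ j" using gam by simp
    moreover have "(\<integral>\<^sup>+ xh. f xh \<partial>state_law S P n pol x' j) = (\<integral>\<^sup>+ z. f (fst z) \<partial>traj S P n pol (mu x') j)"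
      unfolding state_law_def
      by (rule nn_integral_distr) (simp_all add: f measurable_cong_sets[OF prob_meas_facts(2)[OF traj_space[OF measurable_space[OF mu_meas x']]] refl])
    ultimately show "ennreal (pmf (geometric_pmf (1 - \<gamma>)) j) * (\<integral>\<^sup>+ xh. f xh \<partial>state_law S P n pol x' j)
        = ennreal ((1 - \<gamma>) * \<gamma> ^ j) * (\<integral>\<^sup>+ z. f (fst z) \<partial>traj S P n pol (mu x') j)" by simp
  qed
  finally show ?thesis .
qed

end




lemma fubini_bnd:
  fixes f :: "'x \<Rightarrow> 'y \<Rightarrow> real"
  assumes M1: "prob_space M1" and M2: "prob_space M2"
    and fm: "(\<lambda>p. f (fst p) (snd p)) \<in> borel_measurable (M1 \<Otimes>\<^sub>M M2)"
    and fb: "\<And>x y. x \<in> space M1 \<Longrightarrow> y \<in> space M2 \<Longrightarrow> \<bar>f x y\<bar> \<le> C"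
  shows "(\<integral>x. (\<integral>y. f x y \<partial>M2) \<partial>M1) = (\<integral>y. (\<integral>x. f x y \<partial>M1) \<partial>M2)"
proof -
  interpret pair_prob_space M1 M2
    using M1 M2 by (simp add: pair_prob_space_def pair_sigma_finite_def prob_space_imp_sigma_finite)
  have "integrable (M1 \<Otimes>\<^sub>M M2) (case_prod f)"
    by (rule intgr[OF prob_space_pair[OF M1 M2], where C=C])
      (use fm fb in \<open>auto simp: space_pair_measure case_prod_beta'\<close>)
  then show ?thesis by (rule Fubini_integral[symmetric])
qed

locale two = dm S P R \<gamma> B for S :: "'s measure" and P :: "'s \<Rightarrow> 'a::metric_space \<Rightarrow> 's measure"
    and R \<gamma> B +
  fixes n m :: nat and pol polt :: "('s \<times> (nat \<Rightarrow> 'a)) \<Rightarrow> 'a measure"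
  assumes mn: "m < n"
    and pol: "pol \<in> aug_space S n \<rightarrow>\<^sub>M prob_algebra borel"
    and polt: "polt \<in> aug_space S m \<rightarrow>\<^sub>M prob_algebra borel"
begin

sublocale A: dmp S P R \<gamma> B n pol by unfold_locales (rule pol)
sublocale T: dmp S P R \<gamma> B m polt by unfold_locales (rule polt)

abbreviation "db x \<equiv> delayed_belief S P n m x"
abbreviation "BQ \<equiv> B / (1 - \<gamma>)"

lemma mle: "m \<le> n" using mn by simp

lemma dbf:
  assumes "x \<in> space (aug_space S n)"
  shows "prob_space (db x)" "sets (db x) = sets (aug_space S m)" "space (db x) = space (aug_space S m)"
  using db_facts[OF assms mle] by auto

definition "F z = (\<integral>xt. T.Qf (xt, snd z) \<partial>db (fst z))"
definition "Ht xt = (\<integral>a. T.Qf (xt, a) \<partial>polt xt)"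
definition "Vtb x = (\<integral>xt. Ht xt \<partial>db x)"
definition "J p = (\<integral>a. T.Qf (snd p, a) \<partial>pol (fst p))"
definition "w x = (\<integral>xt. Ht xt - J (x, xt) \<partial>db x)"
definition "D z = F z - A.Qf z"

lemma Qt_bnd: "xt \<in> space (aug_space S m) \<Longrightarrow> \<bar>T.Qf (xt, a)\<bar> \<le> BQ"
  by (rule T.Qf_bnd) (simp add: space_pair_measure)

lemma Qa_bnd: "x \<in> space (aug_space S n) \<Longrightarrow> \<bar>A.Qf (x, a)\<bar> \<le> BQ"
  by (rule A.Qf_bnd) (simp add: space_pair_measure)

lemma Qt_meas1: "xt \<in> space (aug_space S m) \<Longrightarrow> (\<lambda>a. T.Qf (xt, a)) \<in> borel_measurable borel"
  using measurable_compose[OF _ T.Qf_meas, of "\<lambda>a. (xt, a)" borel] by simp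

lemma Qa_meas1: "x \<in> space (aug_space S n) \<Longrightarrow> (\<lambda>a. A.Qf (x, a)) \<in> borel_measurable borel"
  using measurable_compose[OF _ A.Qf_meas, of "\<lambda>a. (x, a)" borel] by simp

lemma Qt_meas2: "a \<in> space borel \<Longrightarrow> (\<lambda>xt. T.Qf (xt, a)) \<in> borel_measurable (aug_space S m)"
  using measurable_compose[OF _ T.Qf_meas, of "\<lambda>xt. (xt, a)" "aug_space S m"] by simp

lemma Ht_meas: "Ht \<in> borel_measurable (aug_space S m)"
  unfolding Ht_def[abs_def] by (rule integral_kernel_meas[OF T.Qf_meas polt])

lemma Ht_bnd: "xt \<in> space (aug_space S m) \<Longrightarrow> \<bar>Ht xt\<bar> \<le> BQ"
  unfolding Ht_def
  by (rule int_bnd) (auto simp: T.pol_facts Qt_meas1 Qt_bnd measurable_cong_sets[OF T.pol_facts(2) refl])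

lemma J_meas: "J \<in> borel_measurable (aug_space S n \<Otimes>\<^sub>M aug_space S m)"
proof -
  have K: "(\<lambda>p. pol (fst p)) \<in> aug_space S n \<Otimes>\<^sub>M aug_space S m \<rightarrow>\<^sub>M prob_algebra borel"
    by (rule measurable_compose[OF measurable_fst pol])
  have f: "(\<lambda>q. T.Qf (snd (fst q), snd q)) \<in> borel_measurable ((aug_space S n \<Otimes>\<^sub>M aug_space S m) \<Otimes>\<^sub>M borel)"
    by (rule measurable_compose[OF _ T.Qf_meas]) simp
  show ?thesis unfolding J_def[abs_def] using integral_kernel_meas[OF f K] by simp
qed

lemma J_bnd: "x \<in> space (aug_space S n) \<Longrightarrow> xt \<in> space (aug_space S m) \<Longrightarrow> \<bar>J (x, xt)\<bar> \<le> BQ"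
  unfolding J_def
  by (rule int_bnd) (auto simp: A.pol_facts Qt_meas1 Qt_bnd measurable_cong_sets[OF A.pol_facts(2) refl])

lemma db_meas': "(\<lambda>x. db x) \<in> aug_space S n \<rightarrow>\<^sub>M prob_algebra (aug_space S m)"
  by (rule db_meas[OF mle])

lemma w_meas: "w \<in> borel_measurable (aug_space S n)"
proof -
  have f: "(\<lambda>p. Ht (snd p) - J p) \<in> borel_measurable (aug_space S n \<Otimes>\<^sub>M aug_space S m)"
    using Ht_meas J_meas by measurable
  show ?thesis unfolding w_def[abs_def] using integral_kernel_meas[OF f db_meas'] by simp
qed

lemma w_bnd: "x \<in> space (aug_space S n) \<Longrightarrow> \<bar>w x\<bar> \<le> 2 * BQ"
  unfolding w_def
proof (rule int_bnd)
  assume x: "x \<in> space (aug_space S n)"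
  show "prob_space (db x)" by (rule dbf(1)[OF x])
  have "(\<lambda>xt. J (x, xt)) \<in> borel_measurable (aug_space S m)"
    using measurable_compose[OF _ J_meas, of "\<lambda>xt. (x, xt)"] x by simp
  then show "(\<lambda>xt. Ht xt - J (x, xt)) \<in> borel_measurable (db x)"
    using Ht_meas by (simp add: measurable_cong_sets[OF dbf(2)[OF x] refl])
  fix xt assume "xt \<in> space (db x)"
  then have xt: "xt \<in> space (aug_space S m)" using dbf(3)[OF x] by simp
  show "\<bar>Ht xt - J (x, xt)\<bar> \<le> 2 * BQ" using Ht_bnd[OF xt] J_bnd[OF x xt] by linarith
qed

lemma F_meas: "F \<in> borel_measurable A.ASB"
proof -
  have K: "(\<lambda>z. db (fst z)) \<in> A.ASB \<rightarrow>\<^sub>M prob_algebra (aug_space S m)"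
    by (rule measurable_compose[OF measurable_fst db_meas'])
  have f: "(\<lambda>q. T.Qf (snd q, snd (fst q))) \<in> borel_measurable (A.ASB \<Otimes>\<^sub>M aug_space S m)"
    by (rule measurable_compose[OF _ T.Qf_meas]) simp
  show ?thesis unfolding F_def[abs_def] using integral_kernel_meas[OF f K] by simp
qed

lemma F_bnd: "z \<in> space A.ASB \<Longrightarrow> \<bar>F z\<bar> \<le> BQ"
  unfolding F_def
proof (rule int_bnd)
  assume z: "z \<in> space A.ASB"
  then have x: "fst z \<in> space (aug_space S n)" by (auto simp: space_pair_measure)
  show "prob_space (db (fst z))" by (rule dbf(1)[OF x])
  show "(\<lambda>xt. T.Qf (xt, snd z)) \<in> borel_measurable (db (fst z))"
    using Qt_meas2 by (simp add: measurable_cong_sets[OF dbf(2)[OF x] refl])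
  fix xt assume "xt \<in> space (db (fst z))"
  then show "\<bar>T.Qf (xt, snd z)\<bar> \<le> BQ" using dbf(3)[OF x] Qt_bnd by simp
qed

lemma Vtb_meas: "Vtb \<in> borel_measurable (aug_space S n)"
proof -
  have f: "(\<lambda>p. Ht (snd p)) \<in> borel_measurable (aug_space S n \<Otimes>\<^sub>M aug_space S m)"
    using Ht_meas by measurable
  show ?thesis unfolding Vtb_def[abs_def] using integral_kernel_meas[OF f db_meas'] by simp
qed

lemma Vtb_bnd: "x \<in> space (aug_space S n) \<Longrightarrow> \<bar>Vtb x\<bar> \<le> BQ"
  unfolding Vtb_def
  by (rule int_bnd) (auto simp: dbf Ht_bnd Ht_meas measurable_cong_sets[OF dbf(2) refl])

lemma D_meas: "D \<in> borel_measurable A.ASB"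
  unfolding D_def[abs_def] using F_meas A.Qf_meas by measurable

lemma D_bnd: "z \<in> space A.ASB \<Longrightarrow> \<bar>D z\<bar> \<le> 2 * BQ"
  unfolding D_def using F_bnd[of z] A.Qf_bnd[of z] by linarith

end




context two begin

lemma F_rec:
  assumes z: "z \<in> space A.ASB"
  shows "F z = A.rw z + \<gamma> * (\<integral>x''. Vtb x'' \<partial>cd_kernel S P n (fst z) (snd z))"
proof -
  obtain x a where zx: "z = (x, a)" by (cases z)
  have x: "x \<in> space (aug_space S n)" using z zx by (simp add: space_pair_measure)
  have xta: "(xt, a) \<in> space T.ASB" if "xt \<in> space (aug_space S m)" for xt
    using that by (simp add: space_pair_measure)
  have step1: "T.Qf (xt, a) = cd_reward S P R m xt a + \<gamma> * (\<integral>x2. Ht x2 \<partial>cd_kernel S P m xt a)"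
    if xt: "xt \<in> space (aug_space S m)" for xt
  proof -
    have "T.Qf (xt, a) = T.rw (xt, a) + \<gamma> * (\<integral>z'. T.Qf z' \<partial>T.sa (xt, a))"
      by (rule T.Qf_bellman[OF xta[OF xt]])
    also have "(\<integral>z'. T.Qf z' \<partial>T.sa (xt, a)) = (\<integral>x2. (\<integral>a'. T.Qf (x2, a') \<partial>polt x2) \<partial>cd_kernel S P m xt a)"
      using T.sa_int[OF xta[OF xt] T.Qf_meas T.Qf_bnd] by simp
    finally show ?thesis by (simp add: T.rw_def Ht_def)
  qed
  have ckm: "(\<lambda>xt. cd_kernel S P m xt a) \<in> aug_space S m \<rightarrow>\<^sub>M prob_algebra (aug_space S m)"
    by (rule ck_meas)
  have i1: "integrable (db x) (\<lambda>xt. cd_reward S P R m xt a)"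
    by (rule intgr[OF dbf(1)[OF x], where C=B])
      (auto simp: measurable_cong_sets[OF dbf(2)[OF x] refl] cr_meas1 dbf(3)[OF x] cd_reward_bnd)
  have m2: "(\<lambda>xt. \<integral>x2. Ht x2 \<partial>cd_kernel S P m xt a) \<in> borel_measurable (aug_space S m)"
  proof -
    have f: "(\<lambda>p. Ht (snd p)) \<in> borel_measurable (aug_space S m \<Otimes>\<^sub>M aug_space S m)"
      using Ht_meas by measurable
    show ?thesis using integral_kernel_meas[OF f ckm] by simp
  qed
  have b2: "\<bar>\<integral>x2. Ht x2 \<partial>cd_kernel S P m xt a\<bar> \<le> BQ" if xt: "xt \<in> space (aug_space S m)" for xt
    by (rule int_bnd) (auto simp: ck_facts[OF xt] Ht_bnd Ht_meas measurable_cong_sets[OF ck_facts(2)[OF xt] refl])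
  have i2: "integrable (db x) (\<lambda>xt. \<integral>x2. Ht x2 \<partial>cd_kernel S P m xt a)"
    by (rule intgr[OF dbf(1)[OF x], where C=BQ])
      (auto simp: measurable_cong_sets[OF dbf(2)[OF x] refl] m2 dbf(3)[OF x] b2)
  have "F z = (\<integral>xt. cd_reward S P R m xt a + \<gamma> * (\<integral>x2. Ht x2 \<partial>cd_kernel S P m xt a) \<partial>db x)"
    unfolding F_def zx fst_conv snd_conv
    by (rule Bochner_Integration.integral_cong[OF refl]) (simp add: step1 dbf(3)[OF x])
  also have "\<dots> = (\<integral>xt. cd_reward S P R m xt a \<partial>db x) + \<gamma> * (\<integral>xt. (\<integral>x2. Ht x2 \<partial>cd_kernel S P m xt a) \<partial>db x)"
    using i1 i2 by simp
  also have "(\<integral>xt. cd_reward S P R m xt a \<partial>db x) = A.rw z"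
    using reward_consistent[OF x mle] by (simp add: A.rw_def zx)
  also have "(\<integral>xt. (\<integral>x2. Ht x2 \<partial>cd_kernel S P m xt a) \<partial>db x)
      = (\<integral>x2. Ht x2 \<partial>bind (db x) (\<lambda>xt. cd_kernel S P m xt a))"
  proof (rule integral_bind[where K="aug_space S m" and B=BQ and B'=1, symmetric])
    show "(\<lambda>xt. cd_kernel S P m xt a) \<in> db x \<rightarrow>\<^sub>M subprob_algebra (aug_space S m)"
      by (simp add: measurable_cong_sets[OF dbf(2)[OF x] refl] measurable_prob_algebraD[OF ckm])
    show "finite_measure (db x)" using dbf(1)[OF x] prob_space_def by blast
    show "AE xt in db x. emeasure (cd_kernel S P m xt a) (space (cd_kernel S P m xt a)) \<le> ennreal 1"
      by (rule AE_le1[where N="aug_space S m"]) (simp add: dbf(3)[OF x] measurable_space[OF ckm])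
  qed (auto simp: Ht_meas Ht_bnd)
  also have "bind (db x) (\<lambda>xt. cd_kernel S P m xt a) = bind (cd_kernel S P n x a) db"
    by (rule trans_consistent[OF x mle])
  also have "(\<integral>x2. Ht x2 \<partial>bind (cd_kernel S P n x a) db) = (\<integral>x''. (\<integral>x2. Ht x2 \<partial>db x'') \<partial>cd_kernel S P n x a)"
  proof (rule integral_bind[where K="aug_space S m" and B=BQ and B'=1])
    show "(\<lambda>x''. db x'') \<in> cd_kernel S P n x a \<rightarrow>\<^sub>M subprob_algebra (aug_space S m)"
      by (simp add: measurable_cong_sets[OF ck_facts(2)[OF x] refl] measurable_prob_algebraD[OF db_meas'])
    show "finite_measure (cd_kernel S P n x a)" using ck_facts(1)[OF x] prob_space_def by blast
    show "AE x'' in cd_kernel S P n x a. emeasure (db x'') (space (db x'')) \<le> ennreal 1"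
      by (rule AE_le1[where N="aug_space S m"]) (simp add: ck_facts(3)[OF x] measurable_space[OF db_meas'])
  qed (auto simp: Ht_meas Ht_bnd)
  finally show ?thesis by (simp add: Vtb_def zx)
qed

lemma Qa_int_meas: "(\<lambda>x''. \<integral>a'. A.Qf (x'', a') \<partial>pol x'') \<in> borel_measurable (aug_space S n)"
  using integral_kernel_meas[OF A.Qf_meas pol] by simp

lemma Qa_int_bnd: "x'' \<in> space (aug_space S n) \<Longrightarrow> \<bar>\<integral>a'. A.Qf (x'', a') \<partial>pol x''\<bar> \<le> BQ"
  by (rule int_bnd) (auto simp: A.pol_facts Qa_meas1 Qa_bnd measurable_cong_sets[OF A.pol_facts(2) refl])

lemma inner_eq:
  assumes x2: "x'' \<in> space (aug_space S n)"
  shows "(\<integral>a'. w x'' + D (x'', a') \<partial>pol x'') = Vtb x'' - (\<integral>a'. A.Qf (x'', a') \<partial>pol x'')"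
proof -
  note pf = A.pol_facts[OF x2]
  have Fm: "(\<lambda>a'. F (x'', a')) \<in> borel_measurable borel"
    using measurable_compose[OF _ F_meas, of "\<lambda>a'. (x'', a')" borel] x2 by simp
  have xa: "(x'', a') \<in> space A.ASB" for a' using x2 by (simp add: space_pair_measure)
  have iF: "integrable (pol x'') (\<lambda>a'. F (x'', a'))"
    by (rule intgr[OF pf(1), where C=BQ]) (auto simp: measurable_cong_sets[OF pf(2) refl] Fm F_bnd[OF xa])
  have iQ: "integrable (pol x'') (\<lambda>a'. A.Qf (x'', a'))"
    by (rule intgr[OF pf(1), where C=BQ]) (auto simp: measurable_cong_sets[OF pf(2) refl] Qa_meas1[OF x2] Qa_bnd[OF x2])
  have "(\<integral>a'. w x'' + D (x'', a') \<partial>pol x'') = (\<integral>a'. w x'' + (F (x'', a') - A.Qf (x'', a')) \<partial>pol x'')"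
    by (simp add: D_def)
  also have "\<dots> = w x'' + ((\<integral>a'. F (x'', a') \<partial>pol x'') - (\<integral>a'. A.Qf (x'', a') \<partial>pol x''))"
  proof -
    interpret pp: prob_space "pol x''" by (rule pf(1))
    have ic: "integrable (pol x'') (\<lambda>a'. w x'')" by simp
    have id: "integrable (pol x'') (\<lambda>a'. F (x'', a') - A.Qf (x'', a'))" using iF iQ by simp
    show ?thesis
      using Bochner_Integration.integral_add[OF ic id] Bochner_Integration.integral_diff[OF iF iQ] pp.prob_space by simp
  qed
  finally have c1: "(\<integral>a'. w x'' + D (x'', a') \<partial>pol x'') = w x'' + ((\<integral>a'. F (x'', a') \<partial>pol x'') - (\<integral>a'. A.Qf (x'', a') \<partial>pol x''))" .
  have c2: "(\<integral>a'. F (x'', a') \<partial>pol x'') = (\<integral>xt. J (x'', xt) \<partial>db x'')"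
  proof -
    have "(\<integral>a'. F (x'', a') \<partial>pol x'') = (\<integral>a'. (\<integral>xt. T.Qf (xt, a') \<partial>db x'') \<partial>pol x'')"
      by (simp add: F_def)
    also have "\<dots> = (\<integral>xt. (\<integral>a'. T.Qf (xt, a') \<partial>pol x'') \<partial>db x'')"
    proof (rule fubini_bnd[OF dbf(1)[OF x2] pf(1), symmetric, where C=BQ])
      show "(\<lambda>p. T.Qf (fst p, snd p)) \<in> borel_measurable (db x'' \<Otimes>\<^sub>M pol x'')"
        using T.Qf_meas by (simp add: measurable_cong_sets[OF sets_pair_measure_cong[OF dbf(2)[OF x2] pf(2)] refl])
      show "\<And>xt y. xt \<in> space (db x'') \<Longrightarrow> y \<in> space (pol x'') \<Longrightarrow> \<bar>T.Qf (xt, y)\<bar> \<le> BQ"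
        using Qt_bnd dbf(3)[OF x2] by simp
    qed
    finally show ?thesis by (simp add: J_def)
  qed
  have c3: "w x'' = Vtb x'' - (\<integral>xt. J (x'', xt) \<partial>db x'')"
  proof -
    have Jm: "(\<lambda>xt. J (x'', xt)) \<in> borel_measurable (aug_space S m)"
      using measurable_compose[OF _ J_meas, of "\<lambda>xt. (x'', xt)"] x2 by simp
    have iH: "integrable (db x'') Ht"
      by (rule intgr[OF dbf(1)[OF x2], where C=BQ]) (auto simp: measurable_cong_sets[OF dbf(2)[OF x2] refl] Ht_meas dbf(3)[OF x2] Ht_bnd)
    have iJ: "integrable (db x'') (\<lambda>xt. J (x'', xt))"
      by (rule intgr[OF dbf(1)[OF x2], where C=BQ]) (auto simp: measurable_cong_sets[OF dbf(2)[OF x2] refl] Jm dbf(3)[OF x2] J_bnd[OF x2])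
    show ?thesis unfolding w_def Vtb_def using iH iJ by simp
  qed
  show ?thesis using c1 c2 c3 by simp
qed

lemma D_rec:
  assumes z: "z \<in> space A.ASB"
  shows "D z = \<gamma> * (\<integral>z'. w (fst z') + D z' \<partial>A.sa z)"
proof -
  obtain x a where zx: "z = (x, a)" by (cases z)
  have x: "x \<in> space (aug_space S n)" using z zx by (simp add: space_pair_measure)
  note kf = ck_facts[OF x, of a]
  have wDm: "(\<lambda>z'. w (fst z') + D z') \<in> borel_measurable A.ASB"
    using w_meas D_meas by measurable
  have wDb: "\<bar>w (fst z') + D z'\<bar> \<le> 4 * BQ" if "z' \<in> space A.ASB" for z'
  proof -
    have "fst z' \<in> space (aug_space S n)" using that by (auto simp: space_pair_measure)
    then show ?thesis using w_bnd[of "fst z'"] D_bnd[OF that] by linarith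
  qed
  have e1: "(\<integral>z'. A.Qf z' \<partial>A.sa z) = (\<integral>x''. (\<integral>a'. A.Qf (x'', a') \<partial>pol x'') \<partial>cd_kernel S P n x a)"
    using A.sa_int[OF z A.Qf_meas A.Qf_bnd] zx by simp
  have e2: "(\<integral>z'. w (fst z') + D z' \<partial>A.sa z) = (\<integral>x''. (\<integral>a'. w x'' + D (x'', a') \<partial>pol x'') \<partial>cd_kernel S P n x a)"
    using A.sa_int[OF z wDm wDb] zx by simp
  have iV: "integrable (cd_kernel S P n x a) Vtb"
    by (rule intgr[OF kf(1), where C=BQ]) (auto simp: measurable_cong_sets[OF kf(2) refl] Vtb_meas kf(3) Vtb_bnd)
  have iQ: "integrable (cd_kernel S P n x a) (\<lambda>x''. \<integral>a'. A.Qf (x'', a') \<partial>pol x'')"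
    by (rule intgr[OF kf(1), where C=BQ]) (auto simp: measurable_cong_sets[OF kf(2) refl] Qa_int_meas kf(3) Qa_int_bnd)
  have "D z = \<gamma> * ((\<integral>x''. Vtb x'' \<partial>cd_kernel S P n x a) - (\<integral>x''. (\<integral>a'. A.Qf (x'', a') \<partial>pol x'') \<partial>cd_kernel S P n x a))"
    unfolding D_def using F_rec[OF z] A.Qf_bellman[OF z] e1 zx by (simp add: algebra_simps)
  also have "(\<integral>x''. Vtb x'' \<partial>cd_kernel S P n x a) - (\<integral>x''. (\<integral>a'. A.Qf (x'', a') \<partial>pol x'') \<partial>cd_kernel S P n x a)
      = (\<integral>x''. Vtb x'' - (\<integral>a'. A.Qf (x'', a') \<partial>pol x'') \<partial>cd_kernel S P n x a)"
    using iV iQ by simp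
  also have "\<dots> = (\<integral>x''. (\<integral>a'. w x'' + D (x'', a') \<partial>pol x'') \<partial>cd_kernel S P n x a)"
    by (rule Bochner_Integration.integral_cong[OF refl]) (simp add: kf(3) inner_eq)
  finally show ?thesis using e2 by simp
qed

end




context two begin

abbreviation "mk x k \<equiv> traj S P n pol (A.mu x) k"

lemma mk_space: "x \<in> space (aug_space S n) \<Longrightarrow> mk x k \<in> space (prob_algebra A.ASB)"
  by (rule A.traj_space[OF measurable_space[OF A.mu_meas]])

lemma mk_facts:
  assumes "x \<in> space (aug_space S n)"
  shows "prob_space (mk x k)" "sets (mk x k) = sets A.ASB" "space (mk x k) = space A.ASB"
  using prob_meas_facts[OF mk_space[OF assms]] by auto

definition "e x k = (\<integral>z. D z \<partial>mk x k)"
definition "u x k = (\<integral>z. w (fst z) \<partial>mk x k)"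

lemma wf_meas: "(\<lambda>z. w (fst z)) \<in> borel_measurable A.ASB"
  using w_meas by measurable

lemma wf_bnd: "z \<in> space A.ASB \<Longrightarrow> \<bar>w (fst z)\<bar> \<le> 2 * BQ"
  by (rule w_bnd) (auto simp: space_pair_measure)

lemma e_bnd:
  assumes x: "x \<in> space (aug_space S n)"
  shows "\<bar>e x k\<bar> \<le> 2 * BQ"
  unfolding e_def
proof (rule int_bnd[OF mk_facts(1)[OF x]])
  show "D \<in> borel_measurable (mk x k)" by (simp add: measurable_cong_sets[OF mk_facts(2)[OF x] refl] D_meas)
  fix z assume "z \<in> space (mk x k)"
  then have "z \<in> space A.ASB" using mk_facts(3)[OF x] by simp
  then show "\<bar>D z\<bar> \<le> 2 * BQ" by (rule D_bnd)
qed

lemma e_rec: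
  assumes x: "x \<in> space (aug_space S n)"
  shows "e x k = \<gamma> * (u x (Suc k) + e x (Suc k))"
proof -
  note mf = mk_facts[OF x, of k]
  note mf' = mk_facts[OF x, of "Suc k"]
  have wDm: "(\<lambda>z'. w (fst z') + D z') \<in> borel_measurable A.ASB"
    using w_meas D_meas by measurable
  have wDb: "\<bar>w (fst z') + D z'\<bar> \<le> 4 * BQ" if "z' \<in> space A.ASB" for z'
    using wf_bnd[OF that] D_bnd[OF that] by linarith
  have "e x k = (\<integral>z. \<gamma> * (\<integral>z'. w (fst z') + D z' \<partial>A.sa z) \<partial>mk x k)"
    unfolding e_def by (rule Bochner_Integration.integral_cong[OF refl]) (simp add: mf(3) D_rec)
  also have "\<dots> = \<gamma> * (\<integral>z. (\<integral>z'. w (fst z') + D z' \<partial>A.sa z) \<partial>mk x k)" by simp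
  also have "(\<integral>z. (\<integral>z'. w (fst z') + D z' \<partial>A.sa z) \<partial>mk x k) = (\<integral>z'. w (fst z') + D z' \<partial>bind (mk x k) A.sa)"
  proof (rule integral_bind[where K=A.ASB and B="4 * BQ" and B'=1, symmetric])
    show "A.sa \<in> mk x k \<rightarrow>\<^sub>M subprob_algebra A.ASB"
      by (simp add: measurable_cong_sets[OF mf(2) refl] A.sa_meas')
    show "finite_measure (mk x k)" using mf(1) prob_space_def by blast
    show "AE z in mk x k. emeasure (A.sa z) (space (A.sa z)) \<le> ennreal 1"
      by (rule AE_le1[where N=A.ASB]) (simp add: mf(3) measurable_space[OF A.sa_meas])
    show "(\<lambda>z'. w (fst z') + D z') \<in> borel_measurable A.ASB" by (rule wDm)
    show "\<And>z'. z' \<in> space A.ASB \<Longrightarrow> \<bar>w (fst z') + D z'\<bar> \<le> 4 * BQ" by (rule wDb)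
  qed
  also have "bind (mk x k) A.sa = mk x (Suc k)" by simp
  also have "(\<integral>z'. w (fst z') + D z' \<partial>mk x (Suc k)) = u x (Suc k) + e x (Suc k)"
  proof -
    have i1: "integrable (mk x (Suc k)) (\<lambda>z. w (fst z))"
    proof (rule intgr[OF mf'(1), where C="2*BQ"])
      show "(\<lambda>z. w (fst z)) \<in> borel_measurable (mk x (Suc k))"
        by (subst measurable_cong_sets[OF mf'(2) refl]) (rule wf_meas)
      fix z assume "z \<in> space (mk x (Suc k))"
      then have "z \<in> space A.ASB" using mf'(3) by blast
      then show "\<bar>w (fst z)\<bar> \<le> 2 * BQ" by (rule wf_bnd)
    qed
    have i2: "integrable (mk x (Suc k)) D"
    proof (rule intgr[OF mf'(1), where C="2*BQ"])
      show "D \<in> borel_measurable (mk x (Suc k))"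
        by (subst measurable_cong_sets[OF mf'(2) refl]) (rule D_meas)
      fix z assume "z \<in> space (mk x (Suc k))"
      then have "z \<in> space A.ASB" using mf'(3) by blast
      then show "\<bar>D z\<bar> \<le> 2 * BQ" by (rule D_bnd)
    qed
    show ?thesis unfolding u_def e_def by (rule Bochner_Integration.integral_add[OF i1 i2])
  qed
  finally show ?thesis .
qed

lemma e_unroll:
  assumes x: "x \<in> space (aug_space S n)"
  shows "e x 0 = (\<Sum>j<N. \<gamma> ^ Suc j * u x (Suc j)) + \<gamma> ^ N * e x N"
proof (induction N)
  case 0 then show ?case by simp
next
  case (Suc N)
  then show ?case using e_rec[OF x, of N] by (simp add: algebra_simps)
qed

lemma e_sums:
  assumes x: "x \<in> space (aug_space S n)"
  shows "(\<lambda>j. \<gamma> ^ Suc j * u x (Suc j)) sums e x 0"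
proof -
  have t0: "(\<lambda>N. \<gamma> ^ N * e x N) \<longlonglongrightarrow> 0"
  proof (rule Lim_null_comparison)
    show "\<forall>\<^sub>F N in sequentially. norm (\<gamma> ^ N * e x N) \<le> \<gamma> ^ N * (2 * BQ)"
    proof (intro always_eventually allI)
      fix N
      have "\<gamma> ^ N * \<bar>e x N\<bar> \<le> \<gamma> ^ N * (2 * BQ)"
        using e_bnd[OF x, of N] gam by (intro mult_left_mono) auto
      then show "norm (\<gamma> ^ N * e x N) \<le> \<gamma> ^ N * (2 * BQ)" using gam by (simp add: abs_mult)
    qed
    show "(\<lambda>N. \<gamma> ^ N * (2 * BQ)) \<longlonglongrightarrow> 0"
      using gam by (intro tendsto_mult_left_zero LIMSEQ_power_zero) simp
  qed
  have "(\<lambda>N. e x 0 - \<gamma> ^ N * e x N) \<longlonglongrightarrow> e x 0 - 0"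
    by (intro tendsto_diff tendsto_const t0)
  moreover have "(\<lambda>N. e x 0 - \<gamma> ^ N * e x N) = (\<lambda>N. \<Sum>j<N. \<gamma> ^ Suc j * u x (Suc j))"
    using e_unroll[OF x] by (intro ext) (simp add: algebra_simps)
  ultimately have "(\<lambda>N. \<Sum>j<N. \<gamma> ^ Suc j * u x (Suc j)) \<longlonglongrightarrow> e x 0" by simp
  then show ?thesis by (simp add: sums_def)
qed

end




context two begin

lemma Qt_int: "xh \<in> space (aug_space S n) \<Longrightarrow> integrable (db xh) (\<lambda>xt. T.Qf (xt, a))"
  by (rule intgr[OF dbf(1), where C=BQ])
    (auto simp: measurable_cong_sets[OF dbf(2) refl] Qt_meas2 dbf(3) Qt_bnd)

lemma LHS_eq:
  assumes x: "x \<in> space (aug_space S n)"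
  shows "(\<integral>a. (\<integral>xt. T.Qf (xt, a) - A.Qf (x, a) \<partial>db x) \<partial>pol x) = e x 0"
proof -
  interpret pd: prob_space "db x" by (rule dbf(1)[OF x])
  have "(\<integral>xt. T.Qf (xt, a) - A.Qf (x, a) \<partial>db x) = D (x, a)" for a
    using Qt_int[OF x, of a] pd.prob_space by (simp add: D_def F_def)
  then have "(\<integral>a. (\<integral>xt. T.Qf (xt, a) - A.Qf (x, a) \<partial>db x) \<partial>pol x) = (\<integral>a. D (x, a) \<partial>pol x)" by simp
  also have "\<dots> = (\<integral>z. D z \<partial>A.mu x)" by (rule A.int_mu[OF x D_meas, symmetric])
  finally show ?thesis by (simp add: e_def)
qed

lemma vis_space:
  assumes x': "x' \<in> space (aug_space S n)"
  shows "space (visitation S P \<gamma> n pol x') = space (aug_space S n)"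
proof -
  have "sets (visitation S P \<gamma> n pol x') = sets (aug_space S n)"
    unfolding visitation_def by (rule sets_bind) (simp_all add: state_law_def)
  then show ?thesis by (rule sets_eq_imp_space_eq)
qed

lemma w_le_W:
  assumes L: "0 < L" and Lip: "\<forall>xt\<in>space (aug_space S m). L-lipschitz_on UNIV (\<lambda>a. T.Qf (xt, a))"
    and xh: "xh \<in> space (aug_space S n)"
  shows "ennreal (max 0 (w xh / L)) \<le> (\<integral>\<^sup>+ xht. wasserstein1 (polt xht) (pol xh) \<partial>db xh)"
proof -
  have Jm: "(\<lambda>xt. J (xh, xt)) \<in> borel_measurable (aug_space S m)"
    using measurable_compose[OF _ J_meas, of "\<lambda>xt. (xh, xt)"] xh by simp
  have ik: "integrable (db xh) (\<lambda>xt. (Ht xt - J (xh, xt)) / L)"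
  proof (rule intgr[OF dbf(1)[OF xh], where C="2 * BQ / L"])
    show "(\<lambda>xt. (Ht xt - J (xh, xt)) / L) \<in> borel_measurable (db xh)"
      using Ht_meas Jm by (simp add: measurable_cong_sets[OF dbf(2)[OF xh] refl])
    fix xt assume "xt \<in> space (db xh)"
    then have xt: "xt \<in> space (aug_space S m)" using dbf(3)[OF xh] by simp
    have "\<bar>Ht xt - J (xh, xt)\<bar> \<le> 2 * BQ" using Ht_bnd[OF xt] J_bnd[OF xh xt] by linarith
    then have "\<bar>Ht xt - J (xh, xt)\<bar> / L \<le> 2 * BQ / L" using L by (intro divide_right_mono) auto
    then show "\<bar>(Ht xt - J (xh, xt)) / L\<bar> \<le> 2 * BQ / L" using L by (simp add: abs_divide)
  qed
  have "ennreal (max 0 (w xh / L)) = ennreal (\<integral>xt. (Ht xt - J (xh, xt)) / L \<partial>db xh)"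
    by (simp add: ennreal_max_0 w_def)
  also have "\<dots> \<le> (\<integral>\<^sup>+ xt. ennreal ((Ht xt - J (xh, xt)) / L) \<partial>db xh)"
    by (rule ennreal_int_le[OF ik])
  also have "\<dots> \<le> (\<integral>\<^sup>+ xht. wasserstein1 (polt xht) (pol xh) \<partial>db xh)"
  proof (rule nn_integral_mono)
    fix xt assume "xt \<in> space (db xh)"
    then have xt: "xt \<in> space (aug_space S m)" using dbf(3)[OF xh] by simp
    have "ennreal (((\<integral>a. T.Qf (xt, a) \<partial>polt xt) - (\<integral>a. T.Qf (xt, a) \<partial>pol xh)) / L) \<le> wasserstein1 (polt xt) (pol xh)"
      by (rule kantorovich[OF L _ _ measurable_space[OF polt xt] measurable_space[OF pol xh], where C=BQ])
        (use Lip xt Qt_bnd[OF xt] in auto)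
    then show "ennreal ((Ht xt - J (xh, xt)) / L) \<le> wasserstein1 (polt xt) (pol xh)"
      by (simp add: Ht_def J_def)
  qed
  finally show ?thesis .
qed

lemma w_zero:
  assumes Lip: "\<forall>xt\<in>space (aug_space S m). 0-lipschitz_on UNIV (\<lambda>a. T.Qf (xt, a))"
    and xh: "xh \<in> space (aug_space S n)"
  shows "w xh = 0"
proof -
  have "Ht xt - J (xh, xt) = 0" if xt: "xt \<in> space (aug_space S m)" for xt
  proof -
    have c: "T.Qf (xt, a) = T.Qf (xt, undefined)" for a
      using Lip xt by (auto simp: lipschitz_on_def)
    have "Ht xt = (\<integral>a. T.Qf (xt, undefined) \<partial>polt xt)"
      unfolding Ht_def by (rule Bochner_Integration.integral_cong[OF refl]) (rule c)
    also have "\<dots> = T.Qf (xt, undefined)" using prob_space.prob_space[OF T.pol_facts(1)[OF xt]] by simp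
    finally have h1: "Ht xt = T.Qf (xt, undefined)" .
    have "J (xh, xt) = (\<integral>a. T.Qf (xt, undefined) \<partial>pol xh)"
      unfolding J_def by (simp only: fst_conv snd_conv) (rule Bochner_Integration.integral_cong[OF refl], rule c)
    also have "\<dots> = T.Qf (xt, undefined)" using prob_space.prob_space[OF A.pol_facts(1)[OF xh]] by simp
    finally have h2: "J (xh, xt) = T.Qf (xt, undefined)" .
    show ?thesis using h1 h2 by simp
  qed
  then have "w xh = (\<integral>xt. 0 \<partial>db xh)"
    unfolding w_def by (intro Bochner_Integration.integral_cong refl) (simp add: dbf(3)[OF xh])
  then show ?thesis by simp
qed

end




lemma maxdiv:
  fixes t K L :: real
  assumes L: "0 < L" and t: "\<bar>t\<bar> \<le> K"
  shows "\<bar>max 0 (t / L)\<bar> \<le> K / L"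
proof -
  have "t \<le> K" using t by linarith
  then have a: "t / L \<le> K / L" using L by (intro divide_right_mono) auto
  have "0 \<le> K" using t by linarith
  then have b: "0 \<le> K / L" using L by simp
  show ?thesis using a b by simp
qed

context two begin

lemma u_int:
  assumes x: "x \<in> space (aug_space S n)"
  shows "integrable (mk x k) (\<lambda>z. w (fst z))"
proof (rule intgr[OF mk_facts(1)[OF x], where C="2*BQ"])
  show "(\<lambda>z. w (fst z)) \<in> borel_measurable (mk x k)"
    by (subst measurable_cong_sets[OF mk_facts(2)[OF x] refl]) (rule wf_meas)
  fix z assume "z \<in> space (mk x k)"
  then have "z \<in> space A.ASB" using mk_facts(3)[OF x] by blast
  then show "\<bar>w (fst z)\<bar> \<le> 2 * BQ" by (rule wf_bnd)
qed

lemma g_meas: "(\<lambda>z. max 0 (w (fst z) / L)) \<in> borel_measurable A.ASB"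
  using w_meas by measurable

lemma g_int:
  assumes x: "x \<in> space (aug_space S n)" and L: "0 < L"
  shows "integrable (mk x k) (\<lambda>z. max 0 (w (fst z) / L))"
proof (rule intgr[OF mk_facts(1)[OF x], where C="2*BQ/L"])
  show "(\<lambda>z. max 0 (w (fst z) / L)) \<in> borel_measurable (mk x k)"
    by (subst measurable_cong_sets[OF mk_facts(2)[OF x] refl]) (rule g_meas)
  fix z assume "z \<in> space (mk x k)"
  then have "z \<in> space A.ASB" using mk_facts(3)[OF x] by blast
  then have "\<bar>w (fst z)\<bar> \<le> 2 * BQ" by (rule wf_bnd)
  then show "\<bar>max 0 (w (fst z) / L)\<bar> \<le> 2 * BQ / L" by (rule maxdiv[OF L])
qed

lemma ck_a_meas: "x \<in> space (aug_space S n) \<Longrightarrow> (\<lambda>a. cd_kernel S P n x a) \<in> borel \<rightarrow>\<^sub>M prob_algebra (aug_space S n)"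
  using measurable_compose[OF _ cd_kernel_meas, of "\<lambda>a. (x, a)" borel] by simp

lemma nn_chain:
  assumes x: "x \<in> space (aug_space S n)" and L: "0 < L"
    and Lip: "\<forall>xt\<in>space (aug_space S m). L-lipschitz_on UNIV (\<lambda>a. T.Qf (xt, a))"
  shows "ennreal (\<Sum>j. (1 - \<gamma>) * \<gamma> ^ j * (\<integral>z. max 0 (w (fst z) / L) \<partial>mk x (Suc j)))
    \<le> (\<integral>\<^sup>+ a. (\<integral>\<^sup>+ x'. (\<integral>\<^sup>+ xh. (\<integral>\<^sup>+ xht. wasserstein1 (polt xht) (pol xh) \<partial>db xh)
          \<partial>visitation S P \<gamma> n pol x') \<partial>cd_kernel S P n x a) \<partial>pol x)"
proof -
  define G where "G j = (\<integral>z. max 0 (w (fst z) / L) \<partial>mk x (Suc j))" for j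
  define h where "h z = ennreal (max 0 (w (fst z) / L))" for z :: "('s \<times> (nat \<Rightarrow> 'a)) \<times> 'a"
  define c where "c j = (1 - \<gamma>) * \<gamma> ^ j" for j :: nat
  define \<Phi> where "\<Phi> j x' = (\<integral>\<^sup>+ z. h z \<partial>traj S P n pol (A.mu x') j)" for j x'
  have hm: "h \<in> borel_measurable A.ASB" unfolding h_def[abs_def] using g_meas by measurable
  have G0: "0 \<le> G j" for j unfolding G_def by (rule integral_nonneg_AE) auto
  have Gb: "G j \<le> 2 * BQ / L" for j
  proof -
    have "\<bar>G j\<bar> \<le> 2 * BQ / L"
      unfolding G_def
    proof (rule int_bnd[OF mk_facts(1)[OF x]])
      show "(\<lambda>z. max 0 (w (fst z) / L)) \<in> borel_measurable (mk x (Suc j))"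
        by (subst measurable_cong_sets[OF mk_facts(2)[OF x] refl]) (rule g_meas)
      fix z assume "z \<in> space (mk x (Suc j))"
      then have "z \<in> space A.ASB" using mk_facts(3)[OF x] by blast
      then have "\<bar>w (fst z)\<bar> \<le> 2 * BQ" by (rule wf_bnd)
      then show "\<bar>max 0 (w (fst z) / L)\<bar> \<le> 2 * BQ / L" by (rule maxdiv[OF L])
    qed
    then show ?thesis by simp
  qed
  have c0: "0 \<le> c j" for j using gam by (simp add: c_def)
  have sT: "summable (\<lambda>j. c j * G j)"
  proof -
    have "summable (\<lambda>j. \<gamma> ^ j * ((1 - \<gamma>) * G j))"
    proof (rule geo_summable[where C="(1 - \<gamma>) * (2 * BQ / L)"])
      fix j
      have "(1 - \<gamma>) * G j \<le> (1 - \<gamma>) * (2 * BQ / L)" by (rule mult_left_mono[OF Gb]) (use gam in simp)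
      moreover have "0 \<le> (1 - \<gamma>) * G j" using G0[of j] gam by simp
      ultimately show "\<bar>(1 - \<gamma>) * G j\<bar> \<le> (1 - \<gamma>) * (2 * BQ / L)" by linarith
    qed
    then show ?thesis by (simp add: c_def mult_ac)
  qed
  have \<Phi>m: "\<Phi> j \<in> borel_measurable (aug_space S n)" for j
    unfolding \<Phi>_def[abs_def]
    by (rule measurable_compose[OF measurable_prob_algebraD[OF A.trajmu_meas] nn_integral_measurable_subprob_algebra[OF hm]])
  have cPm: "(\<lambda>x'. ennreal (c j) * \<Phi> j x') \<in> borel_measurable (aug_space S n)" for j
    using \<Phi>m[of j] by measurable
  have am: "(\<lambda>a. \<integral>\<^sup>+ x'. \<Phi> j x' \<partial>cd_kernel S P n x a) \<in> borel_measurable (pol x)" for j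
    by (subst measurable_cong_sets[OF A.pol_facts(2)[OF x] refl])
      (rule measurable_compose[OF measurable_prob_algebraD[OF ck_a_meas[OF x]] nn_integral_measurable_subprob_algebra[OF \<Phi>m]])
  have "ennreal (\<Sum>j. c j * G j) = (\<Sum>j. ennreal (c j * G j))"
    by (rule suminf_ennreal2[symmetric]) (use c0 G0 sT in auto)
  also have "\<dots> = (\<Sum>j. ennreal (c j) * (\<integral>\<^sup>+ z. h z \<partial>mk x (Suc j)))"
  proof (rule suminf_cong)
    fix j
    have "(\<integral>\<^sup>+ z. h z \<partial>mk x (Suc j)) = ennreal (G j)"
      unfolding h_def G_def by (rule nn_integral_eq_integral[OF g_int[OF x L]]) auto
    then show "ennreal (c j * G j) = ennreal (c j) * (\<integral>\<^sup>+ z. h z \<partial>mk x (Suc j))"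
      using c0 G0 by (simp add: ennreal_mult)
  qed
  also have "\<dots> = (\<Sum>j. ennreal (c j) * (\<integral>\<^sup>+ a. (\<integral>\<^sup>+ x'. \<Phi> j x' \<partial>cd_kernel S P n x a) \<partial>pol x))"
    unfolding \<Phi>_def by (simp add: A.chain_nn[OF x hm])
  also have "\<dots> = (\<Sum>j. (\<integral>\<^sup>+ a. ennreal (c j) * (\<integral>\<^sup>+ x'. \<Phi> j x' \<partial>cd_kernel S P n x a) \<partial>pol x))"
    by (intro suminf_cong nn_integral_cmult[symmetric] am)
  also have "\<dots> = (\<integral>\<^sup>+ a. (\<Sum>j. ennreal (c j) * (\<integral>\<^sup>+ x'. \<Phi> j x' \<partial>cd_kernel S P n x a)) \<partial>pol x)"
    by (rule nn_integral_suminf[symmetric]) (use am in measurable)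
  also have "\<dots> = (\<integral>\<^sup>+ a. (\<integral>\<^sup>+ x'. (\<Sum>j. ennreal (c j) * \<Phi> j x') \<partial>cd_kernel S P n x a) \<partial>pol x)"
  proof (rule nn_integral_cong)
    fix a
    have "(\<integral>\<^sup>+ x'. (\<Sum>j. ennreal (c j) * \<Phi> j x') \<partial>cd_kernel S P n x a)
        = (\<Sum>j. (\<integral>\<^sup>+ x'. ennreal (c j) * \<Phi> j x' \<partial>cd_kernel S P n x a))"
      by (rule nn_integral_suminf) (simp add: measurable_cong_sets[OF ck_facts(2)[OF x] refl] cPm)
    also have "\<dots> = (\<Sum>j. ennreal (c j) * (\<integral>\<^sup>+ x'. \<Phi> j x' \<partial>cd_kernel S P n x a))"
      by (intro suminf_cong nn_integral_cmult) (simp add: measurable_cong_sets[OF ck_facts(2)[OF x] refl] \<Phi>m)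
    finally show "(\<Sum>j. ennreal (c j) * (\<integral>\<^sup>+ x'. \<Phi> j x' \<partial>cd_kernel S P n x a))
        = (\<integral>\<^sup>+ x'. (\<Sum>j. ennreal (c j) * \<Phi> j x') \<partial>cd_kernel S P n x a)" by simp
  qed
  also have "\<dots> = (\<integral>\<^sup>+ a. (\<integral>\<^sup>+ x'. (\<integral>\<^sup>+ xh. ennreal (max 0 (w xh / L)) \<partial>visitation S P \<gamma> n pol x') \<partial>cd_kernel S P n x a) \<partial>pol x)"
  proof (intro nn_integral_cong)
    fix a x' assume "x' \<in> space (cd_kernel S P n x a)"
    then have x': "x' \<in> space (aug_space S n)" using ck_facts(3)[OF x] by simp
    have fm: "(\<lambda>xh. ennreal (max 0 (w xh / L))) \<in> borel_measurable (aug_space S n)"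
      using w_meas by measurable
    show "(\<Sum>j. ennreal (c j) * \<Phi> j x') = (\<integral>\<^sup>+ xh. ennreal (max 0 (w xh / L)) \<partial>visitation S P \<gamma> n pol x')"
      unfolding A.vis_nn[OF x' fm] c_def \<Phi>_def h_def ..
  qed
  also have "\<dots> \<le> (\<integral>\<^sup>+ a. (\<integral>\<^sup>+ x'. (\<integral>\<^sup>+ xh. (\<integral>\<^sup>+ xht. wasserstein1 (polt xht) (pol xh) \<partial>db xh)
          \<partial>visitation S P \<gamma> n pol x') \<partial>cd_kernel S P n x a) \<partial>pol x)"
  proof (intro nn_integral_mono)
    fix a x' xh assume "x' \<in> space (cd_kernel S P n x a)" and xh: "xh \<in> space (visitation S P \<gamma> n pol x')"
    then have x': "x' \<in> space (aug_space S n)" using ck_facts(3)[OF x] by simp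
    have "xh \<in> space (aug_space S n)" using xh vis_space[OF x'] by simp
    then show "ennreal (max 0 (w xh / L)) \<le> (\<integral>\<^sup>+ xht. wasserstein1 (polt xht) (pol xh) \<partial>db xh)"
      by (rule w_le_W[OF L Lip])
  qed
  finally show ?thesis by (simp add: c_def G_def)
qed

end




context two begin

lemma G_bnds:
  assumes x: "x \<in> space (aug_space S n)" and L: "0 < L"
  shows "0 \<le> (\<integral>z. max 0 (w (fst z) / L) \<partial>mk x k)" "(\<integral>z. max 0 (w (fst z) / L) \<partial>mk x k) \<le> 2 * BQ / L"
proof -
  show "0 \<le> (\<integral>z. max 0 (w (fst z) / L) \<partial>mk x k)" by (rule integral_nonneg_AE) auto
  have "\<bar>\<integral>z. max 0 (w (fst z) / L) \<partial>mk x k\<bar> \<le> 2 * BQ / L"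
  proof (rule int_bnd[OF mk_facts(1)[OF x]])
    show "(\<lambda>z. max 0 (w (fst z) / L)) \<in> borel_measurable (mk x k)"
      by (subst measurable_cong_sets[OF mk_facts(2)[OF x] refl]) (rule g_meas)
    fix z assume "z \<in> space (mk x k)"
    then have "z \<in> space A.ASB" using mk_facts(3)[OF x] by blast
    then have "\<bar>w (fst z)\<bar> \<le> 2 * BQ" by (rule wf_bnd)
    then show "\<bar>max 0 (w (fst z) / L)\<bar> \<le> 2 * BQ / L" by (rule maxdiv[OF L])
  qed
  then show "(\<integral>z. max 0 (w (fst z) / L) \<partial>mk x k) \<le> 2 * BQ / L" by simp
qed

lemma main_two:
  assumes x: "x \<in> space (aug_space S n)"
    and Lip: "\<forall>xt \<in> space (aug_space S m). L-lipschitz_on UNIV (\<lambda>a. Q_fun S P R \<gamma> m polt xt a)"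
  shows "ereal (\<integral>a. (\<integral>xt. Q_fun S P R \<gamma> m polt xt a - Q_fun S P R \<gamma> n pol x a \<partial>db x) \<partial>pol x)
    \<le> ereal (\<gamma> * L / (1 - \<gamma>)) *
      enn2ereal (\<integral>\<^sup>+ a. (\<integral>\<^sup>+ x'. (\<integral>\<^sup>+ xh. (\<integral>\<^sup>+ xht. wasserstein1 (polt xht) (pol xh) \<partial>db xh)
          \<partial>visitation S P \<gamma> n pol x') \<partial>cd_kernel S P n x a) \<partial>pol x)"
    (is "ereal ?L \<le> ereal ?c * enn2ereal ?I")
proof -
  have QT: "Q_fun S P R \<gamma> m polt xt a = T.Qf (xt, a)" for xt a by (simp add: T.Qf_def)
  have QA: "Q_fun S P R \<gamma> n pol x' a = A.Qf (x', a)" for x' a by (simp add: A.Qf_def)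
  have Lip': "\<forall>xt \<in> space (aug_space S m). L-lipschitz_on UNIV (\<lambda>a. T.Qf (xt, a))"
    using Lip by (simp add: QT)
  have LHS: "?L = e x 0" unfolding QT QA by (rule LHS_eq[OF x])
  have xt0: "(fst x, restrict (\<lambda>_. undefined) {..<m}) \<in> space (aug_space S m)"
    using x by (simp add: space_aug restrict_act)
  have L0: "0 \<le> L" using Lip' xt0 by (auto simp: lipschitz_on_def)
  have es: "(\<lambda>j. \<gamma> ^ Suc j * u x (Suc j)) sums e x 0" by (rule e_sums[OF x])
  show ?thesis
  proof (cases "L = 0")
    case True
    have w0: "w xh = 0" if "xh \<in> space (aug_space S n)" for xh
      by (rule w_zero) (use Lip' True that in auto)
    have u0: "u x k = 0" for k
    proof -
      have "u x k = (\<integral>z. 0 \<partial>mk x k)"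
        unfolding u_def
      proof (rule Bochner_Integration.integral_cong[OF refl])
        fix z assume "z \<in> space (mk x k)"
        then have "z \<in> space A.ASB" using mk_facts(3)[OF x] by blast
        then have "fst z \<in> space (aug_space S n)" by (auto simp: space_pair_measure)
        then show "w (fst z) = 0" by (rule w0)
      qed
      then show ?thesis by simp
    qed
    have "e x 0 = 0" using es u0 by (simp add: sums_iff)
    then show ?thesis using True LHS by (simp add: zero_ereal_def[symmetric])
  next
    case False
    then have L: "0 < L" using L0 by simp
    define G where "G j = (\<integral>z. max 0 (w (fst z) / L) \<partial>mk x (Suc j))" for j
    have G0: "0 \<le> G j" for j unfolding G_def by (rule G_bnds(1)[OF x L])
    have Gb: "G j \<le> 2 * BQ / L" for j unfolding G_def by (rule G_bnds(2)[OF x L])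
    have uG: "\<gamma> ^ Suc j * u x (Suc j) \<le> \<gamma> ^ Suc j * (L * G j)" for j
    proof (rule mult_left_mono)
      have "u x (Suc j) \<le> (\<integral>z. L * max 0 (w (fst z) / L) \<partial>mk x (Suc j))"
        unfolding u_def
      proof (rule integral_mono[OF u_int[OF x] integrable_mult_right[OF g_int[OF x L]]])
        fix z
        have "w (fst z) = L * (w (fst z) / L)" using L by simp
        also have "\<dots> \<le> L * max 0 (w (fst z) / L)" using L by (intro mult_left_mono) auto
        finally show "w (fst z) \<le> L * max 0 (w (fst z) / L)" .
      qed
      then show "u x (Suc j) \<le> L * G j" by (simp add: G_def)
    qed (use gam in simp)
    have sT: "summable (\<lambda>j. (1 - \<gamma>) * \<gamma> ^ j * G j)"
    proof -
      have "summable (\<lambda>j. \<gamma> ^ j * ((1 - \<gamma>) * G j))"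
      proof (rule geo_summable[where C="(1 - \<gamma>) * (2 * BQ / L)"])
        fix j
        have "(1 - \<gamma>) * G j \<le> (1 - \<gamma>) * (2 * BQ / L)" by (rule mult_left_mono[OF Gb]) (use gam in simp)
        moreover have "0 \<le> (1 - \<gamma>) * G j" using G0[of j] gam by simp
        ultimately show "\<bar>(1 - \<gamma>) * G j\<bar> \<le> (1 - \<gamma>) * (2 * BQ / L)" by linarith
      qed
      then show ?thesis by (simp add: mult_ac)
    qed
    define Tsum where "Tsum = (\<Sum>j. (1 - \<gamma>) * \<gamma> ^ j * G j)"
    have eqS: "(\<lambda>j. \<gamma> ^ Suc j * (L * G j)) = (\<lambda>j. ?c * ((1 - \<gamma>) * \<gamma> ^ j * G j))"
      using gam by (intro ext) (simp add: field_simps)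
    have s2: "(\<lambda>j. \<gamma> ^ Suc j * (L * G j)) sums (?c * Tsum)"
      unfolding eqS Tsum_def by (rule sums_mult[OF summable_sums[OF sT]])
    have le1: "e x 0 \<le> ?c * Tsum" by (rule sums_le[OF uG es s2])
    have T0: "0 \<le> Tsum" unfolding Tsum_def using G0 gam by (intro suminf_nonneg sT) simp
    have nn: "ennreal Tsum \<le> ?I"
      using nn_chain[OF x L Lip'] by (simp add: Tsum_def G_def)
    then have "enn2ereal (ennreal Tsum) \<le> enn2ereal ?I" by (simp add: less_eq_ennreal.rep_eq[symmetric])
    then have nn': "ereal Tsum \<le> enn2ereal ?I" using T0 by simp
    have c0: "0 \<le> ?c" using gam L0 by simp
    have "ereal ?L = ereal (e x 0)" using LHS by simp
    also have "\<dots> \<le> ereal (?c * Tsum)" using le1 by simp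
    also have "\<dots> = ereal ?c * ereal Tsum" by simp
    also have "\<dots> \<le> ereal ?c * enn2ereal ?I" by (rule ereal_mult_left_mono[OF nn']) (use c0 in simp)
    finally show ?thesis .
  qed
qed

end


theorem mainTheorem3:
  fixes S :: "'s measure"
    and P :: "'s \<Rightarrow> 'a::metric_space \<Rightarrow> 's measure"
    and R :: "'s \<Rightarrow> 'a \<Rightarrow> real"
    and \<gamma> L\<^sub>Q :: real
    and \<Delta> \<Delta>\<^sub>\<tau> :: nat
    and \<pi> \<pi>\<^sub>\<tau> :: "('s \<times> (nat \<Rightarrow> 'a)) \<Rightarrow> 'a measure"
    and x :: "'s \<times> (nat \<Rightarrow> 'a)"
  assumes gamma: "0 < \<gamma>" "\<gamma> < 1"
    and delay: "\<Delta>\<^sub>\<tau> < \<Delta>"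
    and P_kernel: "(\<lambda>(s, a). P s a) \<in> S \<Otimes>\<^sub>M borel \<rightarrow>\<^sub>M prob_algebra S"
    and R_meas: "(\<lambda>(s, a). R s a) \<in> borel_measurable (S \<Otimes>\<^sub>M borel)"
    and R_bounded: "\<exists>B. \<forall>s a. \<bar>R s a\<bar> \<le> B"
    and pi_kernel: "\<pi> \<in> aug_space S \<Delta> \<rightarrow>\<^sub>M prob_algebra borel"
    and pi_tau_kernel: "\<pi>\<^sub>\<tau> \<in> aug_space S \<Delta>\<^sub>\<tau> \<rightarrow>\<^sub>M prob_algebra borel"
    and Lipschitz: "\<forall>x\<^sub>\<tau> \<in> space (aug_space S \<Delta>\<^sub>\<tau>).
                      L\<^sub>Q-lipschitz_on UNIV (\<lambda>a. Q_fun S P R \<gamma> \<Delta>\<^sub>\<tau> \<pi>\<^sub>\<tau> x\<^sub>\<tau> a)"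
    and x_in: "x \<in> space (aug_space S \<Delta>)"
  shows "ereal (\<integral>a. (\<integral>x\<^sub>\<tau>. Q_fun S P R \<gamma> \<Delta>\<^sub>\<tau> \<pi>\<^sub>\<tau> x\<^sub>\<tau> a - Q_fun S P R \<gamma> \<Delta> \<pi> x a
                       \<partial>delayed_belief S P \<Delta> \<Delta>\<^sub>\<tau> x) \<partial>\<pi> x)
         \<le> ereal (\<gamma> * L\<^sub>Q / (1 - \<gamma>)) *
           enn2ereal (\<integral>\<^sup>+ a. (\<integral>\<^sup>+ x'. (\<integral>\<^sup>+ xh. (\<integral>\<^sup>+ xh\<^sub>\<tau>.
                 wasserstein1 (\<pi>\<^sub>\<tau> xh\<^sub>\<tau>) (\<pi> xh)
               \<partial>delayed_belief S P \<Delta> \<Delta>\<^sub>\<tau> xh)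
             \<partial>visitation S P \<gamma> \<Delta> \<pi> x')
           \<partial>cd_kernel S P \<Delta> x a)
         \<partial>\<pi> x)"
  proof -
  obtain B where Bb: "\<forall>s a. \<bar>R s a\<bar> \<le> B" using R_bounded by blast
  interpret two S P R \<gamma> B \<Delta> \<Delta>\<^sub>\<tau> \<pi> \<pi>\<^sub>\<tau>
    by unfold_locales (use P_kernel R_meas Bb gamma delay pi_kernel pi_tau_kernel in auto)
  show ?thesis by (rule main_two[OF x_in Lipschitz])
qed

end
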